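(* Assume the setting and algorithm described in the context. If $0<\alpha\le\frac1{2L}$, then for all $k\ge0$, almost surely, $$\mathbb E\big[F(\bar x^{k+1})\,|\,\mathcal F^k\big]\le F(\bar x^k)-\frac\alpha2\|\nabla F(\bar x^k)\|^2-\frac\alpha4\|\overline{\nabla\mathbf f}(x^k)\|^2+\frac{\alpha L^2}{n}\|x^k-Jx^k\|^2+\frac{\alpha^2L^3}{n}t^k .$$
   Context: Setting. Let $n,m,p\ge1$ be integers and $\mathcal V=\{1,\dots,n\}$. For each $i\in\mathcal V$ and $j\in\{1,\dots,m\}$, $f_{i,j}:\mathbb R^p\to\mathbb R$ is differentiable and $L$-smooth for some $L>0$, i.e. $\|\nabla f_{i,j}(x)-\nabla f_{i,j}(y)\|\le L\|x-y\|$ for all $x,y\in\mathbb R^p$. Let $f_i:=\frac1m\sum_{j=1}^m f_{i,j}$ and $F:=\frac1n\sum_{i=1}^n f_i$, and assume $F^*:=\inf_{x\in\mathbb R^p}F(x)>-\infty$. Let $\underline W=(\underline w_{ir})\in\mathbb R^{n\times n}$ be a nonnegative, primitive, doubly stochastic matrix ($\underline W\mathbf 1_n=\mathbf 1_n$, $\mathbf 1_n^\top\underline W=\mathbf 1_n^\top$), and let $\lambda\in[0,1)$ be its second largest singular value. Any expression with $\lambda$ in a denominator is read as $+\infty$ when $\lambda=0$. Algorithm GT-SAGA with step-size $\alpha>0$: fix a deterministic $\bar x^0\in\mathbb R^p$; for all $i\in\mathcal V$ set $x_i^0=\bar x^0$, $z_{i,j}^0=x_i^0$ for all $j$, $y_i^0=0$,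 $g_i^{-1}=0$. For $k=0,1,2,\dots$ and every $i\in\mathcal V$: draw $\tau_i^k$ uniformly from $\{1,\dots,m\}$; set $g_i^k=\nabla f_{i,\tau_i^k}(x_i^k)-\nabla f_{i,\tau_i^k}(z_{i,\tau_i^k}^k)+\frac1m\sum_{j=1}^m\nabla f_{i,j}(z_{i,j}^k)$; set $y_i^{k+1}=\sum_{r=1}^n\underline w_{ir}(y_r^k+g_r^k-g_r^{k-1})$; set $x_i^{k+1}=\sum_{r=1}^n\underline w_{ir}(x_r^k-\alpha y_r^{k+1})$; draw $s_i^k$ uniformly from $\{1,\dots,m\}$; set $z_{i,j}^{k+1}=x_i^k$ if $j=s_i^k$ and $z_{i,j}^{k+1}=z_{i,j}^k$ otherwise. The family $\{\tau_i^k,s_i^k: i\in\mathcal V,k\ge0\}$ is independent. Notation. $x^k,y^k,g^k\in\mathbb R^{np}$ stack the $x_i^k$, $y_i^k$, $g_i^k$; $\nabla\mathbf f(x^k)\in\mathbb R^{np}$ stacks $\nabla f_i(x_i^k)$, $i=1,\dots,n$; $W=\underline W\otimes I_p$, $J=(\frac1n\mathbf 1_n\mathbf 1_n^\top)\otimes I_p$; $\bar x^k=\frac1n\sum_i x_i^k$, $\bar g^k=\frac1n\sum_i g_i^k$, $\overline{\nabla\mathbf f}(x^k)=\frac1n\sum_i\nabla f_i(x_i^k)$. $\mathcal F^0$ is the trivial $\sigma$-algebra and $\mathcal F^k=\sigma(\{\tau_i^t,s_i^t:i\in\mathcal V,\ t\le k-1\})$ for $k\ge1$. $t^k:=\frac1n\sum_{i=1}^n\frac1m\sum_{j=1}^m\|\bar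 x^k-z_{i,j}^k\|^2$. $\|\nabla\mathbf f(x^0)\|^2:=\sum_{i=1}^n\|\nabla f_i(\bar x^0)\|^2$. Norms are Euclidean (spectral for matrices); vector and matrix inequalities are entrywise. *)

theory Defs
  imports "HOL-Probability.Probability"
begin

(* Vertices are indexed by {..<n}, components by {..<m} (0-based). *)

fun mat_pow :: "nat \<Rightarrow> (nat \<Rightarrow> nat \<Rightarrow> real) \<Rightarrow> nat \<Rightarrow> nat \<Rightarrow> nat \<Rightarrow> real" where
  "mat_pow n W 0 = (\<lambda>i j. if i = j then 1 else 0)"
| "mat_pow n W (Suc k) = (\<lambda>i j. \<Sum>r<n. mat_pow n W k i r * W r j)"

definition primitive_mat :: "nat \<Rightarrow> (nat \<Rightarrow> nat \<Rightarrow> real) \<Rightarrow> bool" where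
  "primitive_mat n W \<longleftrightarrow> (\<exists>k. \<forall>i<n. \<forall>j<n. mat_pow n W k i j > 0)"

definition doubly_stochastic :: "nat \<Rightarrow> (nat \<Rightarrow> nat \<Rightarrow> real) \<Rightarrow> bool" where
  "doubly_stochastic n W \<longleftrightarrow>
     (\<forall>i<n. \<forall>j<n. W i j \<ge> 0) \<and> (\<forall>i<n. (\<Sum>r<n. W i r) = 1) \<and> (\<forall>r<n. (\<Sum>i<n. W i r) = 1)"

(* state of GT-SAGA at iteration k: (x^k, y^k, z^k, g^{k-1}) *)
type_synonym 'p gt_state =
  "(nat \<Rightarrow> real^'p) \<times> (nat \<Rightarrow> real^'p) \<times> (nat \<Rightarrow> nat \<Rightarrow> real^'p) \<times> (nat \<Rightarrow> real^'p)"

(* one random draw per iteration: (tau^k, s^k), tau^k i and s^k i in {..<m} *)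
type_synonym draw = "(nat \<Rightarrow> nat) \<times> (nat \<Rightarrow> nat)"

definition saga_grad ::
  "nat \<Rightarrow> (nat \<Rightarrow> nat \<Rightarrow> real^'p \<Rightarrow> real^'p) \<Rightarrow> 'p gt_state \<Rightarrow> draw \<Rightarrow> nat \<Rightarrow> real^'p" where
  "saga_grad m gf st d i =
     (case st of (x, y, z, gp) \<Rightarrow>
        gf i (fst d i) (x i) - gf i (fst d i) (z i (fst d i))
        + (1 / real m) *\<^sub>R (\<Sum>j<m. gf i j (z i j)))"

definition gt_step ::
  "nat \<Rightarrow> nat \<Rightarrow> (nat \<Rightarrow> nat \<Rightarrow> real) \<Rightarrow> real \<Rightarrow> (nat \<Rightarrow> nat \<Rightarrow> real^'p \<Rightarrow> real^'p)
   \<Rightarrow> 'p gt_state \<Rightarrow> draw \<Rightarrow> 'p gt_state" where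
  "gt_step n m W \<alpha> gf st d =
     (case st of (x, y, z, gp) \<Rightarrow>
       let g = saga_grad m gf st d;
           y' = (\<lambda>i. \<Sum>r<n. W i r *\<^sub>R (y r + g r - gp r));
           x' = (\<lambda>i. \<Sum>r<n. W i r *\<^sub>R (x r - \<alpha> *\<^sub>R y' r));
           z' = (\<lambda>i j. if j = snd d i then x i else z i j)
       in (x', y', z', g))"

fun gt_saga ::
  "nat \<Rightarrow> nat \<Rightarrow> (nat \<Rightarrow> nat \<Rightarrow> real) \<Rightarrow> real \<Rightarrow> (nat \<Rightarrow> nat \<Rightarrow> real^'p \<Rightarrow> real^'p)
   \<Rightarrow> real^'p \<Rightarrow> nat \<Rightarrow> (nat \<Rightarrow> draw) \<Rightarrow> 'p gt_state" where
  "gt_saga n m W \<alpha> gf x0 0 \<omega> = ((\<lambda>i. x0), (\<lambda>i. 0), (\<lambda>i j. x0), (\<lambda>i. 0))"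
| "gt_saga n m W \<alpha> gf x0 (Suc k) \<omega> = gt_step n m W \<alpha> gf (gt_saga n m W \<alpha> gf x0 k \<omega>) (\<omega> k)"

definition draw_pmf :: "nat \<Rightarrow> nat \<Rightarrow> draw pmf" where
  "draw_pmf n m = pmf_of_set (({..<n} \<rightarrow>\<^sub>E {..<m}) \<times> ({..<n} \<rightarrow>\<^sub>E {..<m}))"

definition gt_space :: "nat \<Rightarrow> nat \<Rightarrow> (nat \<Rightarrow> draw) measure" where
  "gt_space n m = (\<Pi>\<^sub>M k\<in>UNIV. measure_pmf (draw_pmf n m))"

(* F^k = sigma-algebra generated by the draws at times t \<le> k-1 *)
definition gt_filt :: "nat \<Rightarrow> nat \<Rightarrow> nat \<Rightarrow> (nat \<Rightarrow> draw) measure" where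
  "gt_filt n m k = vimage_algebra (space (gt_space n m)) (\<lambda>\<omega>. restrict \<omega> {..<k})
                     (\<Pi>\<^sub>M t\<in>{..<k}. measure_pmf (draw_pmf n m))"

definition avg_x :: "nat \<Rightarrow> (nat \<Rightarrow> real^'p) \<Rightarrow> real^'p" where
  "avg_x n x = (1 / real n) *\<^sub>R (\<Sum>i<n. x i)"

end

theory Submission
  imports Defs
begin

lemma card_TT: "card (PiE {..<n} (\<lambda>_. {..<m::nat})) = m ^ n"
  by (simp add: card_PiE)

lemma count1:
  assumes "i < n" "j < m"
  shows "(\<Sum>\<tau>\<in>PiE {..<n} (\<lambda>_. {..<m::nat}). (if \<tau> i = j then 1 else 0::real)) = real m ^ (n - 1)"
proof -
  define f where "f = (\<lambda>x y. if x = i then (if y = j then 1 else 0) else (1::real))"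
  have "(\<Prod>x\<in>{..<n}. \<Sum>y\<in>{..<m}. f x y) = (\<Sum>g\<in>PiE {..<n} (\<lambda>_. {..<m}). \<Prod>x\<in>{..<n}. f x (g x))"
    by (rule prod_sum_PiE) auto
  moreover have "\<And>g. (\<Prod>x\<in>{..<n}. f x (g x)) = (if g i = j then 1 else 0)"
  proof -
    fix g
    have "(\<Prod>x\<in>{..<n}. f x (g x)) = f i (g i) * (\<Prod>x\<in>{..<n}-{i}. f x (g x))"
      using assms by (subst prod.remove[of _ i]) auto
    also have "(\<Prod>x\<in>{..<n}-{i}. f x (g x)) = 1" by (rule prod.neutral) (auto simp: f_def)
    finally show "(\<Prod>x\<in>{..<n}. f x (g x)) = (if g i = j then 1 else 0)" by (simp add: f_def)
  qed
  moreover have "(\<Prod>x\<in>{..<n}. \<Sum>y\<in>{..<m}. f x y) = real m ^ (n - 1)"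
  proof -
    have "(\<Prod>x\<in>{..<n}. \<Sum>y\<in>{..<m}. f x y) = (\<Sum>y\<in>{..<m}. f i y) * (\<Prod>x\<in>{..<n}-{i}. \<Sum>y\<in>{..<m}. f x y)"
      using assms by (subst prod.remove[of _ i]) auto
    also have "(\<Sum>y\<in>{..<m}. f i y) = 1" using assms by (simp add: f_def)
    also have "(\<Prod>x\<in>{..<n}-{i}. \<Sum>y\<in>{..<m}. f x y) = (\<Prod>x\<in>{..<n}-{i}. real m)"
      by (rule prod.cong) (auto simp: f_def)
    also have "\<dots> = real m ^ (n - 1)" using assms by simp
    finally show ?thesis by simp
  qed
  ultimately show ?thesis by simp
qed

lemma count2:
  assumes "i < n" "i' < n" "i \<noteq> i'" "j < m" "j' < m"
  shows "(\<Sum>\<tau>\<in>PiE {..<n} (\<lambda>_. {..<m::nat}). (if \<tau> i = j \<and> \<tau> i' = j' then 1 else 0::real)) = real m ^ (n - 2)"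
proof -
  define f where "f = (\<lambda>x y. if x = i then (if y = j then 1 else 0) else if x = i' then (if y = j' then 1 else 0) else (1::real))"
  have "(\<Prod>x\<in>{..<n}. \<Sum>y\<in>{..<m}. f x y) = (\<Sum>g\<in>PiE {..<n} (\<lambda>_. {..<m}). \<Prod>x\<in>{..<n}. f x (g x))"
    by (rule prod_sum_PiE) auto
  moreover have "\<And>g. (\<Prod>x\<in>{..<n}. f x (g x)) = (if g i = j \<and> g i' = j' then 1 else 0)"
  proof -
    fix g
    have "(\<Prod>x\<in>{..<n}. f x (g x)) = f i (g i) * (\<Prod>x\<in>{..<n}-{i}. f x (g x))"
      using assms by (subst prod.remove[of _ i]) auto
    also have "(\<Prod>x\<in>{..<n}-{i}. f x (g x)) = f i' (g i') * (\<Prod>x\<in>{..<n}-{i}-{i'}. f x (g x))"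
      using assms by (subst prod.remove[of _ i']) auto
    also have "(\<Prod>x\<in>{..<n}-{i}-{i'}. f x (g x)) = 1" by (rule prod.neutral) (auto simp: f_def)
    finally show "(\<Prod>x\<in>{..<n}. f x (g x)) = (if g i = j \<and> g i' = j' then 1 else 0)"
      using assms by (simp add: f_def)
  qed
  moreover have "(\<Prod>x\<in>{..<n}. \<Sum>y\<in>{..<m}. f x y) = real m ^ (n - 2)"
  proof -
    have "(\<Prod>x\<in>{..<n}. \<Sum>y\<in>{..<m}. f x y) = (\<Sum>y\<in>{..<m}. f i y) * (\<Prod>x\<in>{..<n}-{i}. \<Sum>y\<in>{..<m}. f x y)"
      using assms by (subst prod.remove[of _ i]) auto
    also have "(\<Prod>x\<in>{..<n}-{i}. \<Sum>y\<in>{..<m}. f x y) = (\<Sum>y\<in>{..<m}. f i' y) * (\<Prod>x\<in>{..<n}-{i}-{i'}. \<Sum>y\<in>{..<m}. f x y)"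
      using assms by (subst prod.remove[of _ i']) auto
    also have "(\<Sum>y\<in>{..<m}. f i y) = 1" using assms by (simp add: f_def)
    also have "(\<Sum>y\<in>{..<m}. f i' y) = 1" using assms by (simp add: f_def)
    also have "(\<Prod>x\<in>{..<n}-{i}-{i'}. \<Sum>y\<in>{..<m}. f x y) = (\<Prod>x\<in>{..<n}-{i}-{i'}. real m)"
      by (rule prod.cong) (auto simp: f_def)
    also have "\<dots> = real m ^ (n - 2)"
    proof -
      have "card ({..<n}-{i}-{i'}) = n - 2" using assms by (simp add: card_Diff_singleton)
      then show ?thesis by simp
    qed
    finally show ?thesis by simp
  qed
  ultimately show ?thesis by simp
qed

lemma scale_if01: "(if c then 1 else 0::real) *\<^sub>R (v::'a::real_vector) = (if c then v else 0)" by simp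

lemma sum_delta_scale: "finite A \<Longrightarrow> a \<in> A \<Longrightarrow> (\<Sum>j\<in>A. (if a = j then 1 else 0::real) *\<^sub>R (h j::'a::real_vector)) = h a"
  by (simp only: scale_if01 sum.delta') simp

lemma sumTT1:
  fixes h :: "nat \<Rightarrow> 'a::real_vector"
  assumes "i < n"
  shows "(\<Sum>\<tau>\<in>PiE {..<n} (\<lambda>_. {..<m::nat}). h (\<tau> i)) = (real m ^ (n - 1)) *\<^sub>R (\<Sum>j<m. h j)"
proof -
  let ?T = "PiE {..<n} (\<lambda>_. {..<m::nat})"
  have "(\<Sum>\<tau>\<in>?T. h (\<tau> i)) = (\<Sum>\<tau>\<in>?T. \<Sum>j<m. (if \<tau> i = j then 1 else 0::real) *\<^sub>R h j)"
  proof (rule sum.cong[OF refl])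
    fix \<tau> assume "\<tau> \<in> ?T"
    then have "\<tau> i < m" using assms by auto
    then show "h (\<tau> i) = (\<Sum>j<m. (if \<tau> i = j then 1 else 0::real) *\<^sub>R h j)"
      by (simp only: sum_delta_scale[of "{..<m}"] finite_lessThan lessThan_iff)
  qed
  also have "\<dots> = (\<Sum>j<m. (\<Sum>\<tau>\<in>?T. (if \<tau> i = j then 1 else 0::real)) *\<^sub>R h j)"
    by (subst sum.swap) (simp add: scaleR_sum_left)
  also have "\<dots> = (\<Sum>j<m. (real m ^ (n - 1)) *\<^sub>R h j)"
    using assms by (intro sum.cong refl) (simp add: count1)
  finally show ?thesis by (simp add: scaleR_sum_right)
qed

lemma sumTT2:
  fixes h :: "nat \<Rightarrow> nat \<Rightarrow> 'a::real_vector"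
  assumes "i < n" "i' < n" "i \<noteq> i'"
  shows "(\<Sum>\<tau>\<in>PiE {..<n} (\<lambda>_. {..<m::nat}). h (\<tau> i) (\<tau> i')) = (real m ^ (n - 2)) *\<^sub>R (\<Sum>j<m. \<Sum>j'<m. h j j')"
proof -
  let ?T = "PiE {..<n} (\<lambda>_. {..<m::nat})"
  have "(\<Sum>\<tau>\<in>?T. h (\<tau> i) (\<tau> i')) = (\<Sum>\<tau>\<in>?T. \<Sum>j<m. \<Sum>j'<m. (if \<tau> i = j \<and> \<tau> i' = j' then 1 else 0::real) *\<^sub>R h j j')"
  proof (rule sum.cong[OF refl])
    fix \<tau> assume "\<tau> \<in> ?T"
    then have "\<tau> i < m" "\<tau> i' < m" using assms by auto
    then show "h (\<tau> i) (\<tau> i') = (\<Sum>j<m. \<Sum>j'<m. (if \<tau> i = j \<and> \<tau> i' = j' then 1 else 0::real) *\<^sub>R h j j')"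
    proof -
      have "(\<Sum>j<m. \<Sum>j'<m. (if \<tau> i = j \<and> \<tau> i' = j' then 1 else 0::real) *\<^sub>R h j j')
          = (\<Sum>j<m. if \<tau> i = j then (\<Sum>j'<m. if \<tau> i' = j' then h j j' else 0) else 0)"
        by (intro sum.cong refl) (auto simp: scale_if01)
      also have "\<dots> = h (\<tau> i) (\<tau> i')" using \<open>\<tau> i < m\<close> \<open>\<tau> i' < m\<close> by (simp only: sum.delta' finite_lessThan lessThan_iff if_True)
      finally show ?thesis by (rule sym)
    qed
  qed
  also have "\<dots> = (\<Sum>j<m. \<Sum>j'<m. (\<Sum>\<tau>\<in>?T. (if \<tau> i = j \<and> \<tau> i' = j' then 1 else 0::real)) *\<^sub>R h j j')"
    by (subst sum.swap) (simp add: scaleR_sum_left sum.swap[of _ ?T])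
  also have "\<dots> = (\<Sum>j<m. \<Sum>j'<m. (real m ^ (n - 2)) *\<^sub>R h j j')"
    using assms by (intro sum.cong refl) (simp add: count2)
  finally show ?thesis by (simp add: scaleR_sum_right)
qed

lemma descent:
  fixes f :: "'a::real_inner \<Rightarrow> real" and g :: "'a \<Rightarrow> 'a"
  assumes der: "\<And>x. (f has_derivative (\<lambda>h. g x \<bullet> h)) (at x)"
    and lip: "\<And>x y. norm (g x - g y) \<le> L * norm (x - y)"
  shows "f y \<le> f x + g x \<bullet> (y - x) + L / 2 * (norm (y - x))\<^sup>2"
proof -
  define h where "h = y - x"
  define \<phi> where "\<phi> = (\<lambda>t::real. f (x + t *\<^sub>R h) - t * (g x \<bullet> h) - L / 2 * t\<^sup>2 * (norm h)\<^sup>2)"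
  define \<phi>' where "\<phi>' = (\<lambda>t::real. g (x + t *\<^sub>R h) \<bullet> h - g x \<bullet> h - L * t * (norm h)\<^sup>2)"
  have D: "DERIV \<phi> t :> \<phi>' t" for t
  proof -
    have d1: "((\<lambda>t. x + t *\<^sub>R h) has_derivative (\<lambda>s. s *\<^sub>R h)) (at t)"
      by (auto intro!: derivative_eq_intros)
    have d2: "((\<lambda>t. f (x + t *\<^sub>R h)) has_derivative (\<lambda>s. g (x + t *\<^sub>R h) \<bullet> (s *\<^sub>R h))) (at t)"
      using has_derivative_compose[OF d1 der] by simp
    have d3: "((\<lambda>t. f (x + t *\<^sub>R h)) has_real_derivative (g (x + t *\<^sub>R h) \<bullet> h)) (at t)"
      unfolding has_field_derivative_def
    proof -
      have "(\<lambda>s. g (x + t *\<^sub>R h) \<bullet> (s *\<^sub>R h)) = (*) (g (x + t *\<^sub>R h) \<bullet> h)"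
        by (rule ext) (simp add: mult.commute)
      then show "((\<lambda>t. f (x + t *\<^sub>R h)) has_derivative (*) (g (x + t *\<^sub>R h) \<bullet> h)) (at t)"
        using d2 by simp
    qed
    show ?thesis unfolding \<phi>_def \<phi>'_def
      by (auto intro!: derivative_eq_intros d3)
  qed
  obtain z where z: "0 < z" "z < 1" "\<phi> 1 - \<phi> 0 = (1 - 0) * \<phi>' z"
    using MVT2[of 0 1 \<phi> \<phi>'] D by auto
  have "\<phi>' z \<le> 0"
  proof -
    have "(g (x + z *\<^sub>R h) - g x) \<bullet> h \<le> norm (g (x + z *\<^sub>R h) - g x) * norm h"
      by (rule norm_cauchy_schwarz)
    also have "\<dots> \<le> (L * norm (z *\<^sub>R h)) * norm h"
      using lip[of "x + z *\<^sub>R h" x] by (intro mult_right_mono) auto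
    also have "\<dots> = L * z * (norm h)\<^sup>2" using z by (simp add: power2_eq_square)
    finally show ?thesis unfolding \<phi>'_def by (simp add: inner_diff_left)
  qed
  then have "\<phi> 1 \<le> \<phi> 0" using z by simp
  then show ?thesis unfolding \<phi>_def h_def by simp
qed

lemma norm_avg_sq:
  fixes v :: "nat \<Rightarrow> 'a::real_normed_vector"
  assumes "m \<ge> 1"
  shows "(norm ((1 / real m) *\<^sub>R (\<Sum>j<m. v j)))\<^sup>2 \<le> (1 / real m) * (\<Sum>j<m. (norm (v j))\<^sup>2)"
proof -
  have "norm (\<Sum>j<m. v j) \<le> (\<Sum>j<m. norm (v j))" by (rule norm_sum)
  then have "(norm (\<Sum>j<m. v j))\<^sup>2 \<le> (\<Sum>j<m. norm (v j))\<^sup>2"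
    by (simp add: power_mono)
  also have "\<dots> \<le> (\<Sum>j<m. (norm (v j))\<^sup>2) * real m"
    using sum_squared_le_sum_of_squares[of "\<lambda>j. norm (v j)" "{..<m}"] by simp
  finally have *: "(norm (\<Sum>j<m. v j))\<^sup>2 \<le> (\<Sum>j<m. (norm (v j))\<^sup>2) * real m" .
  have "(norm ((1 / real m) *\<^sub>R (\<Sum>j<m. v j)))\<^sup>2 = (norm (\<Sum>j<m. v j))\<^sup>2 / (real m)\<^sup>2"
    using assms by (simp add: power_divide power2_eq_square)
  also have "\<dots> \<le> (\<Sum>j<m. (norm (v j))\<^sup>2) * real m / (real m)\<^sup>2"
    using * by (intro divide_right_mono) auto
  also have "\<dots> = (1 / real m) * (\<Sum>j<m. (norm (v j))\<^sup>2)"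
    using assms by (simp add: power2_eq_square field_simps)
  finally show ?thesis .
qed

definition gbar :: "nat \<Rightarrow> nat \<Rightarrow> (nat \<Rightarrow> nat \<Rightarrow> real^'p \<Rightarrow> real^'p) \<Rightarrow> 'p gt_state \<Rightarrow> draw \<Rightarrow> real^'p" where
  "gbar n m gf s d = (1 / real n) *\<^sub>R (\<Sum>i<n. saga_grad m gf s d i)"

definition simst :: "nat \<Rightarrow> 'p gt_state \<Rightarrow> 'p gt_state \<Rightarrow> bool" where
  "simst n s s' \<longleftrightarrow> (\<forall>i<n. fst s i = fst s' i \<and> fst (snd s) i = fst (snd s') i
      \<and> fst (snd (snd s)) i = fst (snd (snd s')) i \<and> snd (snd (snd s)) i = snd (snd (snd s')) i)"

definition agree :: "nat \<Rightarrow> nat \<Rightarrow> (nat \<Rightarrow> draw) \<Rightarrow> (nat \<Rightarrow> draw) \<Rightarrow> bool" where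
  "agree n K \<omega> \<omega>' \<longleftrightarrow> (\<forall>t<K. \<forall>i<n. fst (\<omega> t) i = fst (\<omega>' t) i \<and> snd (\<omega> t) i = snd (\<omega>' t) i)"

lemma gt_step_eq:
  "gt_step n m W \<alpha> gf (x, y, z, gp) d =
    ((\<lambda>i. \<Sum>r<n. W i r *\<^sub>R (x r - \<alpha> *\<^sub>R (\<Sum>r'<n. W r r' *\<^sub>R (y r' + saga_grad m gf (x, y, z, gp) d r' - gp r')))),
     (\<lambda>i. \<Sum>r<n. W i r *\<^sub>R (y r + saga_grad m gf (x, y, z, gp) d r - gp r)),
     (\<lambda>i j. if j = snd d i then x i else z i j),
     saga_grad m gf (x, y, z, gp) d)"
  by (simp add: gt_step_def Let_def)

lemma saga_grad_eq:
  "saga_grad m gf (x, y, z, gp) d i = gf i (fst d i) (x i) - gf i (fst d i) (z i (fst d i))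
        + (1 / real m) *\<^sub>R (\<Sum>j<m. gf i j (z i j))"
  by (simp add: saga_grad_def)

lemma saga_grad_cong:
  assumes "simst n s s'" "i < n" "fst d i = fst d' i"
  shows "saga_grad m gf s d i = saga_grad m gf s' d' i"
  using assms by (cases s; cases s') (auto simp: simst_def saga_grad_def)

lemma step_cong:
  assumes "simst n s s'" "\<forall>i<n. fst d i = fst d' i \<and> snd d i = snd d' i"
  shows "simst n (gt_step n m W \<alpha> gf s d) (gt_step n m W \<alpha> gf s' d')"
proof -
  obtain x y z gp where s: "s = (x, y, z, gp)" by (cases s) auto
  obtain x' y' z' gp' where s': "s' = (x', y', z', gp')" by (cases s') auto
  have g: "\<And>i. i < n \<Longrightarrow> saga_grad m gf s d i = saga_grad m gf s' d' i"
    using saga_grad_cong assms by blast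
  have e: "\<And>i. i < n \<Longrightarrow> x i = x' i \<and> y i = y' i \<and> z i = z' i \<and> gp i = gp' i"
    using assms(1) by (auto simp: simst_def s s')
  have Y: "(\<Sum>r<n. W i r *\<^sub>R (y r + saga_grad m gf s d r - gp r)) = (\<Sum>r<n. W i r *\<^sub>R (y' r + saga_grad m gf s' d' r - gp' r))" for i
    by (intro sum.cong refl) (simp add: g e)
  show ?thesis
    using assms(2) unfolding s s' gt_step_eq simst_def
    using Y[unfolded s s'] g[unfolded s s'] e
    by (auto intro!: sum.cong)
qed

lemma saga_cong:
  "agree n K \<omega> \<omega>' \<Longrightarrow> simst n (gt_saga n m W \<alpha> gf x0 K \<omega>) (gt_saga n m W \<alpha> gf x0 K \<omega>')"
proof (induction K)
  case 0
  then show ?case by (simp add: simst_def)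
next
  case (Suc K)
  then have "agree n K \<omega> \<omega>'" by (simp add: agree_def)
  then show ?case using Suc step_cong[of n _ _ "\<omega> K" "\<omega>' K"] by (simp add: agree_def)
qed

lemma W_sum:
  fixes v :: "nat \<Rightarrow> 'a::real_vector"
  assumes "doubly_stochastic n W"
  shows "(\<Sum>i<n. \<Sum>r<n. W i r *\<^sub>R v r) = (\<Sum>r<n. v r)"
proof -
  have "(\<Sum>i<n. \<Sum>r<n. W i r *\<^sub>R v r) = (\<Sum>r<n. (\<Sum>i<n. W i r) *\<^sub>R v r)"
    by (subst sum.swap) (simp add: scaleR_sum_left)
  also have "\<dots> = (\<Sum>r<n. v r)" using assms by (simp add: doubly_stochastic_def)
  finally show ?thesis .
qed

lemma invariant:
  assumes "doubly_stochastic n W"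
  shows "(\<Sum>i<n. fst (snd (gt_saga n m W \<alpha> gf x0 K \<omega>)) i) = (\<Sum>i<n. snd (snd (snd (gt_saga n m W \<alpha> gf x0 K \<omega>))) i)"
proof (induction K)
  case 0
  then show ?case by simp
next
  case (Suc K)
  obtain x y z gp where s: "gt_saga n m W \<alpha> gf x0 K \<omega> = (x, y, z, gp)" by (cases "gt_saga n m W \<alpha> gf x0 K \<omega>") auto
  have IH: "(\<Sum>i<n. y i) = (\<Sum>i<n. gp i)" using Suc s by simp
  have "(\<Sum>i<n. \<Sum>r<n. W i r *\<^sub>R (y r + saga_grad m gf (x, y, z, gp) (\<omega> K) r - gp r))
        = (\<Sum>r<n. y r + saga_grad m gf (x, y, z, gp) (\<omega> K) r - gp r)"
    by (rule W_sum[OF assms])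
  also have "\<dots> = (\<Sum>r<n. saga_grad m gf (x, y, z, gp) (\<omega> K) r)"
    using IH by (simp add: sum.distrib sum_subtractf)
  finally show ?case by (simp add: s gt_step_eq)
qed

lemma avg_step:
  assumes "doubly_stochastic n W" "n \<ge> 1"
  shows "avg_x n (fst (gt_saga n m W \<alpha> gf x0 (Suc K) \<omega>))
       = avg_x n (fst (gt_saga n m W \<alpha> gf x0 K \<omega>)) - \<alpha> *\<^sub>R gbar n m gf (gt_saga n m W \<alpha> gf x0 K \<omega>) (\<omega> K)"
proof -
  obtain x y z gp where s: "gt_saga n m W \<alpha> gf x0 K \<omega> = (x, y, z, gp)" by (cases "gt_saga n m W \<alpha> gf x0 K \<omega>") auto
  have IH: "(\<Sum>i<n. y i) = (\<Sum>i<n. gp i)" using invariant[OF assms(1), of m \<alpha> gf x0 K \<omega>] s by simp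
  let ?g = "saga_grad m gf (x, y, z, gp) (\<omega> K)"
  have Y: "(\<Sum>r<n. (\<Sum>r'<n. W r r' *\<^sub>R (y r' + ?g r' - gp r'))) = (\<Sum>r<n. ?g r)"
  proof -
    have "(\<Sum>r<n. (\<Sum>r'<n. W r r' *\<^sub>R (y r' + ?g r' - gp r'))) = (\<Sum>r<n. y r + ?g r - gp r)"
      by (rule W_sum[OF assms(1)])
    also have "\<dots> = (\<Sum>r<n. ?g r)" using IH by (simp add: sum.distrib sum_subtractf)
    finally show ?thesis .
  qed
  have "(\<Sum>i<n. \<Sum>r<n. W i r *\<^sub>R (x r - \<alpha> *\<^sub>R (\<Sum>r'<n. W r r' *\<^sub>R (y r' + ?g r' - gp r'))))
       = (\<Sum>r<n. x r - \<alpha> *\<^sub>R (\<Sum>r'<n. W r r' *\<^sub>R (y r' + ?g r' - gp r')))"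
    by (rule W_sum[OF assms(1)])
  also have "\<dots> = (\<Sum>r<n. x r) - \<alpha> *\<^sub>R (\<Sum>r<n. (\<Sum>r'<n. W r r' *\<^sub>R (y r' + ?g r' - gp r')))"
    by (simp only: sum_subtractf scaleR_sum_right)
  also have "\<dots> = (\<Sum>r<n. x r) - \<alpha> *\<^sub>R (\<Sum>r<n. ?g r)"
    by (simp only: Y)
  finally have "(\<Sum>i<n. \<Sum>r<n. W i r *\<^sub>R (x r - \<alpha> *\<^sub>R (\<Sum>r'<n. W r r' *\<^sub>R (y r' + ?g r' - gp r'))))
       = (\<Sum>r<n. x r) - \<alpha> *\<^sub>R (\<Sum>r<n. ?g r)" .
  then show ?thesis
    by (simp add: s gt_step_eq avg_x_def gbar_def scaleR_diff_right)
qed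

definition NN :: "nat \<Rightarrow> nat \<Rightarrow> (nat \<Rightarrow> draw) \<Rightarrow> nat \<Rightarrow> nat \<Rightarrow> nat \<times> nat" where
  "NN n K \<omega> = (\<lambda>t i. if t < K \<and> i < n then (fst (\<omega> t) i, snd (\<omega> t) i) else (0, 0))"

definition NNset :: "nat \<Rightarrow> nat \<Rightarrow> (nat \<Rightarrow> nat \<Rightarrow> nat \<times> nat) set" where
  "NNset n K = {\<nu>. \<forall>t i. \<not> (t < K \<and> i < n) \<longrightarrow> \<nu> t i = (0, 0)}"

definition rebuild :: "(nat \<Rightarrow> nat \<Rightarrow> nat \<times> nat) \<Rightarrow> nat \<Rightarrow> draw" where
  "rebuild \<nu> = (\<lambda>t. (\<lambda>i. fst (\<nu> t i), \<lambda>i. snd (\<nu> t i)))"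

lemma agree_rebuild: "agree n K \<omega> (rebuild (NN n K \<omega>))"
  by (simp add: agree_def rebuild_def NN_def)

lemma agree_sym: "agree n K \<omega> \<omega>' \<Longrightarrow> agree n K \<omega>' \<omega>"
  by (auto simp: agree_def)

lemma countable_NNset: "countable (NNset n K)"
proof -
  let ?e = "\<lambda>g t i. if t < K \<and> i < n then g t i else (0::nat, 0::nat)"
  have "NNset n K \<subseteq> ?e ` (PiE {..<K} (\<lambda>_. PiE {..<n} (\<lambda>_. UNIV)))"
  proof
    fix \<nu> assume \<nu>: "\<nu> \<in> NNset n K"
    let ?g = "restrict (\<lambda>t. restrict (\<nu> t) {..<n}) {..<K}"
    have e1: "?e ?g = \<nu>"
    proof (intro ext)
      fix t i show "?e ?g t i = \<nu> t i" using \<nu> unfolding NNset_def by (cases "t < K \<and> i < n") auto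
    qed
    have e2: "?g \<in> PiE {..<K} (\<lambda>_. PiE {..<n} (\<lambda>_. UNIV))" by auto
    show "\<nu> \<in> ?e ` (PiE {..<K} (\<lambda>_. PiE {..<n} (\<lambda>_. UNIV)))" by (rule image_eqI[where f="?e", OF e1[symmetric] e2])
  qed
  moreover have "countable (PiE {..<K} (\<lambda>_. PiE {..<n} (\<lambda>_. UNIV :: (nat \<times> nat) set)))"
    by (intro countable_PiE) auto
  ultimately show ?thesis by (meson countable_image countable_subset)
qed

lemma NN_eq_iff:
  assumes "a \<in> NNset n K"
  shows "NN n K \<omega> = a \<longleftrightarrow> (\<forall>t<K. \<forall>i<n. (fst (\<omega> t) i, snd (\<omega> t) i) = a t i)"
proof
  assume h: "NN n K \<omega> = a"
  show "\<forall>t<K. \<forall>i<n. (fst (\<omega> t) i, snd (\<omega> t) i) = a t i"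
  proof (intro allI impI)
    fix t i assume "t < K" "i < n"
    then have "NN n K \<omega> t i = (fst (\<omega> t) i, snd (\<omega> t) i)" by (simp add: NN_def)
    then show "(fst (\<omega> t) i, snd (\<omega> t) i) = a t i" using h by simp
  qed
next
  assume H: "\<forall>t<K. \<forall>i<n. (fst (\<omega> t) i, snd (\<omega> t) i) = a t i"
  show "NN n K \<omega> = a"
  proof (intro ext)
    fix t i show "NN n K \<omega> t i = a t i"
      using H assms unfolding NN_def NNset_def by (cases "t < K \<and> i < n") auto
  qed
qed

lemma measurable_NN:
  assumes "{..<K} \<subseteq> J"
  shows "NN n K \<in> measurable (PiM J (\<lambda>_. measure_pmf p)) (count_space (NNset n K))"
proof (subst measurable_count_space_eq_countable[OF countable_NNset], safe)
  fix \<omega> show "NN n K \<omega> \<in> NNset n K" by (auto simp: NN_def NNset_def)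
next
  fix a assume a: "a \<in> NNset n K"
  let ?M = "PiM J (\<lambda>_. measure_pmf p)"
  have eq: "NN n K -` {a} \<inter> space ?M = {\<omega>\<in>space ?M. \<forall>t\<in>{..<K}. \<forall>i\<in>{..<n}. (fst (\<omega> t) i, snd (\<omega> t) i) = a t i}"
    using NN_eq_iff[OF a] by blast
  have H: "{\<omega>\<in>space ?M. (fst (\<omega> t) i, snd (\<omega> t) i) = a t i} \<in> sets ?M" if "t < K" for t i
  proof -
    have "t \<in> J" using that assms by auto
    then have "(\<lambda>\<omega>. \<omega> t) \<in> measurable ?M (measure_pmf p)" by (rule measurable_component_singleton)
    then have "(\<lambda>\<omega>. \<omega> t) -` {d. (fst d i, snd d i) = a t i} \<inter> space ?M \<in> sets ?M"
      by (rule measurable_sets) simp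
    then show ?thesis by (simp add: vimage_def Int_def conj_commute)
  qed
  show "NN n K -` {a} \<inter> space ?M \<in> sets ?M"
    unfolding eq
  proof (intro sets.sets_Collect_finite_All finite_lessThan)
    fix t i assume "t \<in> {..<K}" "i \<in> {..<n}"
    then show "{\<omega>\<in>space ?M. (fst (\<omega> t) i, snd (\<omega> t) i) = a t i} \<in> sets ?M" using H by simp
  qed
qed

lemma meas_gen:
  assumes inv: "\<And>\<omega> \<omega>'. agree n K \<omega> \<omega>' \<Longrightarrow> \<Phi> \<omega> = \<Phi> \<omega>'" and J: "{..<K} \<subseteq> J"
  shows "(\<Phi> :: (nat \<Rightarrow> draw) \<Rightarrow> 'b::topological_space) \<in> borel_measurable (PiM J (\<lambda>_. measure_pmf p))"
proof -
  have "\<Phi> = (\<lambda>\<omega>. (\<lambda>\<nu>. \<Phi> (rebuild \<nu>)) (NN n K \<omega>))"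
    using inv agree_rebuild by (auto simp: fun_eq_iff)
  also have "\<dots> \<in> borel_measurable (PiM J (\<lambda>_. measure_pmf p))"
    by (rule measurable_compose[OF measurable_NN[OF J]]) simp
  finally show ?thesis .
qed

lemma subalg_filt: "subalgebra (gt_space n m) (gt_filt n m k)"
proof -
  have "sets (gt_filt n m k) \<subseteq> sets (gt_space n m)"
    unfolding gt_filt_def gt_space_def
    by (rule sets_image_in_sets[OF refl]) (rule measurable_restrict_subset, simp)
  then show ?thesis unfolding subalgebra_def gt_filt_def by simp
qed

lemma prob_space_gt: "prob_space (gt_space n m)"
  unfolding gt_space_def by (intro prob_space_PiM prob_space_measure_pmf)

lemma sfs_filt: "sigma_finite_subalgebra (gt_space n m) (gt_filt n m k)"
proof -
  interpret prob_space "gt_space n m" by (rule prob_space_gt)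
  have "finite_measure_subalgebra (gt_space n m) (gt_filt n m k)"
    unfolding finite_measure_subalgebra_def finite_measure_subalgebra_axioms_def
    using subalg_filt finite_measure_axioms by auto
  then show ?thesis by (rule finite_measure_subalgebra_is_sigma_finite)
qed

lemma filt_meas:
  assumes inv: "\<And>\<omega> \<omega>'. agree n k \<omega> \<omega>' \<Longrightarrow> \<Phi> \<omega> = \<Phi> \<omega>'"
  shows "(\<Phi> :: (nat \<Rightarrow> draw) \<Rightarrow> 'b::topological_space) \<in> borel_measurable (gt_filt n m k)"
proof -
  have "\<Phi> = (\<lambda>\<omega>. \<Phi> (restrict \<omega> {..<k}))"
    using inv by (auto simp: fun_eq_iff agree_def)
  also have "\<dots> \<in> borel_measurable (gt_filt n m k)"
  proof (rule measurable_compose[of _ _ "PiM {..<k} (\<lambda>_. measure_pmf (draw_pmf n m))"])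
    show "(\<lambda>\<omega>. restrict \<omega> {..<k}) \<in> measurable (gt_filt n m k) (PiM {..<k} (\<lambda>_. measure_pmf (draw_pmf n m)))"
      unfolding gt_filt_def by (rule measurable_vimage_algebra1) (auto simp: space_PiM)
    show "\<Phi> \<in> borel_measurable (PiM {..<k} (\<lambda>_. measure_pmf (draw_pmf n m)))"
      by (rule meas_gen[OF inv]) auto
  qed
  finally show ?thesis .
qed

lemma set_draw_pmf:
  assumes "m \<ge> 1"
  shows "set_pmf (draw_pmf n m) = ({..<n} \<rightarrow>\<^sub>E {..<m}) \<times> ({..<n} \<rightarrow>\<^sub>E {..<m})"
proof -
  have "({..<n} \<rightarrow>\<^sub>E {..<m}) \<noteq> {}" using assms by (auto simp: PiE_eq_empty_iff lessThan_empty_iff)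
  then show ?thesis unfolding draw_pmf_def
    by (subst set_pmf_of_set) (auto simp: finite_PiE)
qed

lemma AE_support:
  assumes "m \<ge> 1"
  shows "AE \<omega> in gt_space n m. \<forall>t. \<omega> t \<in> set_pmf (draw_pmf n m)"
  unfolding gt_space_def AE_all_countable
  by (intro allI AE_PiM_component prob_space_measure_pmf AE_measure_pmf) auto

lemma integrable_gen:
  assumes m: "m \<ge> 1" and inv: "\<And>\<omega> \<omega>'. agree n K \<omega> \<omega>' \<Longrightarrow> \<Phi> \<omega> = \<Phi> \<omega>'"
  shows "integrable (gt_space n m) (\<Phi> :: (nat \<Rightarrow> draw) \<Rightarrow> real)"
proof -
  interpret prob_space "gt_space n m" by (rule prob_space_gt)
  define Inn where "Inn = {g :: nat \<Rightarrow> nat \<times> nat. \<forall>i. (i \<in> {..<n} \<longrightarrow> g i \<in> {..<m} \<times> {..<m}) \<and> (i \<notin> {..<n} \<longrightarrow> g i = (0, 0))}"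
  define Fin where "Fin = {\<nu>. \<forall>t. (t \<in> {..<K} \<longrightarrow> \<nu> t \<in> Inn) \<and> (t \<notin> {..<K} \<longrightarrow> \<nu> t = (\<lambda>i. (0, 0)))}"
  have fInn: "finite Inn" unfolding Inn_def by (intro finite_set_of_finite_funs) auto
  have fFin: "finite Fin" unfolding Fin_def by (intro finite_set_of_finite_funs fInn) auto
  have inFin: "NN n K \<omega> \<in> Fin" if "\<forall>t. \<omega> t \<in> set_pmf (draw_pmf n m)" for \<omega>
  proof -
    have "\<omega> t \<in> ({..<n} \<rightarrow>\<^sub>E {..<m}) \<times> ({..<n} \<rightarrow>\<^sub>E {..<m})" for t
      using that set_draw_pmf[OF m] by auto
    then have "fst (\<omega> t) i < m \<and> snd (\<omega> t) i < m" if "i < n" for t i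
    proof -
      have "fst (\<omega> t) \<in> {..<n} \<rightarrow>\<^sub>E {..<m}" "snd (\<omega> t) \<in> {..<n} \<rightarrow>\<^sub>E {..<m}"
        using \<open>\<And>t. \<omega> t \<in> _\<close>[of t] by (auto simp: mem_Times_iff)
      then show ?thesis using that by (auto dest!: PiE_mem)
    qed
    then have "NN n K \<omega> t \<in> Inn" if "t < K" for t
      using that unfolding Inn_def NN_def by auto
    moreover have "NN n K \<omega> t = (\<lambda>i. (0, 0))" if "\<not> t < K" for t
      using that unfolding NN_def by auto
    ultimately show ?thesis unfolding Fin_def by auto
  qed
  define B where "B = (\<Sum>\<nu>\<in>Fin. norm (\<Phi> (rebuild \<nu>)))"
  have "AE \<omega> in gt_space n m. norm (\<Phi> \<omega>) \<le> B"
    using AE_support[OF m]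
  proof eventually_elim
    case (elim \<omega>)
    have "\<Phi> \<omega> = \<Phi> (rebuild (NN n K \<omega>))" using inv agree_rebuild by blast
    then show ?case unfolding B_def
      using inFin[OF elim] fFin by (auto intro!: member_le_sum)
  qed
  moreover have "\<Phi> \<in> borel_measurable (gt_space n m)"
    unfolding gt_space_def by (rule meas_gen[OF inv]) auto
  ultimately show ?thesis by (rule integrable_const_bound)
qed

lemma inner_sum_sum_sq:
  fixes v :: "nat \<Rightarrow> 'a::real_inner"
  shows "(\<Sum>i<n. \<Sum>i'<n. v i \<bullet> v i') = (norm (\<Sum>i<n. v i))\<^sup>2"
  by (simp add: power2_norm_eq_inner inner_sum_left inner_sum_right) (rule sum.swap)

lemma var_le:
  fixes G :: "nat \<Rightarrow> 'a::real_inner"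
  assumes "m \<ge> 1"
  shows "(1 / real m) * (\<Sum>j<m. (norm (G j))\<^sup>2) - (norm ((1 / real m) *\<^sub>R (\<Sum>j<m. G j)))\<^sup>2
         \<le> (1 / real m) * (\<Sum>j<m. (norm (G j - v))\<^sup>2)"
proof -
  define \<mu> where "\<mu> = (1 / real m) *\<^sub>R (\<Sum>j<m. G j)"
  have e1: "(norm (G j - v))\<^sup>2 = (norm (G j))\<^sup>2 - 2 * (G j \<bullet> v) + (norm v)\<^sup>2" for j
    by (simp add: power2_norm_eq_inner inner_diff_left inner_diff_right inner_commute)
  have "(1 / real m) * (\<Sum>j<m. (norm (G j - v))\<^sup>2)
      = (1 / real m) * (\<Sum>j<m. (norm (G j))\<^sup>2) - 2 * (\<mu> \<bullet> v) + (norm v)\<^sup>2"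
    using assms by (simp add: e1 sum.distrib sum_subtractf \<mu>_def inner_sum_left sum_distrib_left[symmetric] field_simps)
  moreover have "(norm (\<mu> - v))\<^sup>2 = (norm \<mu>)\<^sup>2 - 2 * (\<mu> \<bullet> v) + (norm v)\<^sup>2"
    by (simp add: power2_norm_eq_inner inner_diff_left inner_diff_right inner_commute)
  moreover have "(norm (\<mu> - v))\<^sup>2 \<ge> 0" by simp
  ultimately show ?thesis unfolding \<mu>_def[symmetric] by linarith
qed

lemma avg_TT1:
  fixes G :: "nat \<Rightarrow> nat \<Rightarrow> 'a::real_vector"
  assumes n: "n \<ge> 1" and m: "m \<ge> 1"
  shows "(1 / real m ^ n) *\<^sub>R (\<Sum>\<tau>\<in>PiE {..<n} (\<lambda>_. {..<m}). (1 / real n) *\<^sub>R (\<Sum>i<n. G i (\<tau> i)))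
       = (1 / real n) *\<^sub>R (\<Sum>i<n. (1 / real m) *\<^sub>R (\<Sum>j<m. G i j))"
proof -
  have "(\<Sum>\<tau>\<in>PiE {..<n} (\<lambda>_. {..<m}). (1 / real n) *\<^sub>R (\<Sum>i<n. G i (\<tau> i)))
      = (1 / real n) *\<^sub>R (\<Sum>i<n. \<Sum>\<tau>\<in>PiE {..<n} (\<lambda>_. {..<m}). G i (\<tau> i))"
    by (simp add: scaleR_sum_right[symmetric] sum.swap[of _ _ "{..<n}"])
  also have "\<dots> = (1 / real n) *\<^sub>R (\<Sum>i<n. (real m ^ (n - 1)) *\<^sub>R (\<Sum>j<m. G i j))"
    by (intro arg_cong[where f="\<lambda>v. (1 / real n) *\<^sub>R v"] sum.cong refl sumTT1) simp
  finally have *: "(\<Sum>\<tau>\<in>PiE {..<n} (\<lambda>_. {..<m}). (1 / real n) *\<^sub>R (\<Sum>i<n. G i (\<tau> i)))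
      = (1 / real n) *\<^sub>R (\<Sum>i<n. (real m ^ (n - 1)) *\<^sub>R (\<Sum>j<m. G i j))" .
  have c: "(1 / real m ^ n) * real m ^ (n - 1) = 1 / real m"
  proof -
    have "real m ^ n = real m ^ (n - 1) * real m" using n by (metis Suc_diff_1 less_le_trans power_Suc2 zero_less_one)
    then show ?thesis using m by simp
  qed
  have "(1 / real m ^ n) *\<^sub>R ((1 / real n) *\<^sub>R (\<Sum>i<n. (real m ^ (n - 1)) *\<^sub>R (\<Sum>j<m. G i j)))
      = (1 / real n) *\<^sub>R (\<Sum>i<n. ((1 / real m ^ n) * real m ^ (n - 1)) *\<^sub>R (\<Sum>j<m. G i j))"
    by (simp add: scaleR_sum_right mult.commute)
  also have "\<dots> = (1 / real n) *\<^sub>R (\<Sum>i<n. (1 / real m) *\<^sub>R (\<Sum>j<m. G i j))"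
    by (simp only: c)
  finally show ?thesis unfolding * .
qed

lemma avg_TT_inner:
  fixes G :: "nat \<Rightarrow> nat \<Rightarrow> 'a::real_inner"
  assumes n: "n \<ge> 1" and m: "m \<ge> 1"
  shows "(1 / real m ^ n) * (\<Sum>\<tau>\<in>PiE {..<n} (\<lambda>_. {..<m}). w \<bullet> ((1 / real n) *\<^sub>R (\<Sum>i<n. G i (\<tau> i))))
       = w \<bullet> ((1 / real n) *\<^sub>R (\<Sum>i<n. (1 / real m) *\<^sub>R (\<Sum>j<m. G i j)))"
proof -
  have "(1 / real m ^ n) * (\<Sum>\<tau>\<in>PiE {..<n} (\<lambda>_. {..<m}). w \<bullet> ((1 / real n) *\<^sub>R (\<Sum>i<n. G i (\<tau> i))))
     = w \<bullet> ((1 / real m ^ n) *\<^sub>R (\<Sum>\<tau>\<in>PiE {..<n} (\<lambda>_. {..<m}). (1 / real n) *\<^sub>R (\<Sum>i<n. G i (\<tau> i))))"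
    by (simp add: inner_sum_right)
  then show ?thesis using avg_TT1[OF n m, of G] by simp
qed

lemma avg_TT_sq:
  fixes G :: "nat \<Rightarrow> nat \<Rightarrow> 'a::real_inner"
  assumes n: "n \<ge> 1" and m: "m \<ge> 1"
  defines "\<mu>i \<equiv> (\<lambda>i. (1 / real m) *\<^sub>R (\<Sum>j<m. G i j))"
  shows "(1 / real m ^ n) * (\<Sum>\<tau>\<in>PiE {..<n} (\<lambda>_. {..<m}). (norm ((1 / real n) *\<^sub>R (\<Sum>i<n. G i (\<tau> i))))\<^sup>2)
       = (norm ((1 / real n) *\<^sub>R (\<Sum>i<n. \<mu>i i)))\<^sup>2
         + (1 / real n)\<^sup>2 * (\<Sum>i<n. (1 / real m) * (\<Sum>j<m. (norm (G i j))\<^sup>2) - (norm (\<mu>i i))\<^sup>2)"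
proof -
  let ?T = "PiE {..<n} (\<lambda>_. {..<m})"
  define A where "A = (\<lambda>i. (1 / real m) * (\<Sum>j<m. (norm (G i j))\<^sup>2))"
  have mn1: "real m ^ n = real m ^ (n - 1) * real m" using n by (metis Suc_diff_1 less_le_trans power_Suc2 zero_less_one)
  have sq: "(norm ((1 / real n) *\<^sub>R (\<Sum>i<n. G i (\<tau> i))))\<^sup>2
      = (1 / real n)\<^sup>2 * (\<Sum>i<n. \<Sum>i'<n. G i (\<tau> i) \<bullet> G i' (\<tau> i'))" for \<tau>
    by (simp add: inner_sum_sum_sq power_mult_distrib power_divide)
  have cross: "(1 / real m ^ n) * (\<Sum>\<tau>\<in>?T. G i (\<tau> i) \<bullet> G i' (\<tau> i'))
      = (if i = i' then A i else \<mu>i i \<bullet> \<mu>i i')" if "i < n" "i' < n" for i i'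
  proof (cases "i = i'")
    case True
    have "(\<Sum>\<tau>\<in>?T. G i (\<tau> i) \<bullet> G i (\<tau> i)) = real m ^ (n - 1) * (\<Sum>j<m. G i j \<bullet> G i j)"
      using sumTT1[OF that(1), of "\<lambda>j. G i j \<bullet> G i j" m] by simp
    then show ?thesis using True m mn1 by (simp add: A_def power2_norm_eq_inner)
  next
    case False
    have "(\<Sum>\<tau>\<in>?T. G i (\<tau> i) \<bullet> G i' (\<tau> i')) = real m ^ (n - 2) * (\<Sum>j<m. \<Sum>j'<m. G i j \<bullet> G i' j')"
      using sumTT2[OF that False, of "\<lambda>j j'. G i j \<bullet> G i' j'" m] by simp
    also have "(\<Sum>j<m. \<Sum>j'<m. G i j \<bullet> G i' j') = (\<Sum>j<m. G i j) \<bullet> (\<Sum>j<m. G i' j)"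
      by (simp add: inner_sum_left inner_sum_right) (rule sum.swap)
    finally have *: "(\<Sum>\<tau>\<in>?T. G i (\<tau> i) \<bullet> G i' (\<tau> i')) = real m ^ (n - 2) * ((\<Sum>j<m. G i j) \<bullet> (\<Sum>j<m. G i' j))" .
    have "n \<ge> 2" using that False by linarith
    then have mn2: "real m ^ n = real m ^ (n - 2) * (real m * real m)"
      by (metis le_add_diff_inverse2 power_add power2_eq_square)
    show ?thesis using False m unfolding * \<mu>i_def by (simp add: mn2)
  qed
  have "(1 / real m ^ n) * (\<Sum>\<tau>\<in>?T. (norm ((1 / real n) *\<^sub>R (\<Sum>i<n. G i (\<tau> i))))\<^sup>2)
      = (1 / real n)\<^sup>2 * (\<Sum>i<n. \<Sum>i'<n. (1 / real m ^ n) * (\<Sum>\<tau>\<in>?T. G i (\<tau> i) \<bullet> G i' (\<tau> i')))"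
    unfolding sq by (simp add: sum_distrib_left sum.swap[of _ ?T] mult.left_commute)
  also have "\<dots> = (1 / real n)\<^sup>2 * (\<Sum>i<n. \<Sum>i'<n. (if i = i' then A i else \<mu>i i \<bullet> \<mu>i i'))"
    by (intro arg_cong[where f="\<lambda>v. (1 / real n)\<^sup>2 * v"] sum.cong refl cross) auto
  also have "(\<Sum>i<n. \<Sum>i'<n. (if i = i' then A i else \<mu>i i \<bullet> \<mu>i i'))
      = (\<Sum>i<n. \<Sum>i'<n. \<mu>i i \<bullet> \<mu>i i') + (\<Sum>i<n. A i - (norm (\<mu>i i))\<^sup>2)"
  proof -
    have "(\<Sum>i<n. \<Sum>i'<n. (if i = i' then A i else \<mu>i i \<bullet> \<mu>i i'))
        = (\<Sum>i<n. \<Sum>i'<n. \<mu>i i \<bullet> \<mu>i i' + (if i = i' then A i - (norm (\<mu>i i))\<^sup>2 else 0))"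
      by (intro sum.cong refl) (simp add: power2_norm_eq_inner)
    also have "\<dots> = (\<Sum>i<n. \<Sum>i'<n. \<mu>i i \<bullet> \<mu>i i') + (\<Sum>i<n. A i - (norm (\<mu>i i))\<^sup>2)"
      by (simp add: sum.distrib)
    finally show ?thesis .
  qed
  also have "(\<Sum>i<n. \<Sum>i'<n. \<mu>i i \<bullet> \<mu>i i') = (norm (\<Sum>i<n. \<mu>i i))\<^sup>2"
    by (rule inner_sum_sum_sq)
  finally show ?thesis unfolding A_def
    by (simp add: distrib_left power_mult_distrib power_divide)
qed

lemma F_descent:
  fixes f :: "nat \<Rightarrow> nat \<Rightarrow> real^'p \<Rightarrow> real" and gf :: "nat \<Rightarrow> nat \<Rightarrow> real^'p \<Rightarrow> real^'p"
  assumes n: "n \<ge> 1" and m: "m \<ge> 1"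
    and grad: "\<And>i j x. i < n \<Longrightarrow> j < m \<Longrightarrow> (f i j has_derivative (\<lambda>h. gf i j x \<bullet> h)) (at x)"
    and smooth: "\<And>i j x y. i < n \<Longrightarrow> j < m \<Longrightarrow> norm (gf i j x - gf i j y) \<le> L * norm (x - y)"
    and F_def: "F = (\<lambda>x. (1 / real n) * (\<Sum>i<n. (1 / real m) * (\<Sum>j<m. f i j x)))"
    and gF_def: "gF = (\<lambda>x. (1 / real n) *\<^sub>R (\<Sum>i<n. (1 / real m) *\<^sub>R (\<Sum>j<m. gf i j x)))"
  shows "F y \<le> F x + gF x \<bullet> (y - x) + L / 2 * (norm (y - x))\<^sup>2"
proof -
  have d: "f i j y \<le> f i j x + gf i j x \<bullet> (y - x) + L / 2 * (norm (y - x))\<^sup>2" if "i < n" "j < m" for i j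
    by (rule descent[OF grad smooth]) (use that in auto)
  have s1: "(\<Sum>j<m. f i j y) \<le> (\<Sum>j<m. f i j x) + (\<Sum>j<m. gf i j x) \<bullet> (y - x) + real m * (L / 2 * (norm (y - x))\<^sup>2)" if "i < n" for i
  proof -
    have "(\<Sum>j<m. f i j y) \<le> (\<Sum>j<m. f i j x + gf i j x \<bullet> (y - x) + L / 2 * (norm (y - x))\<^sup>2)"
      by (rule sum_mono) (use d that in auto)
    then show ?thesis by (simp add: sum.distrib inner_sum_left)
  qed
  have s2: "(1 / real m) * (\<Sum>j<m. f i j y) \<le> (1 / real m) * (\<Sum>j<m. f i j x) + ((1 / real m) *\<^sub>R (\<Sum>j<m. gf i j x)) \<bullet> (y - x) + L / 2 * (norm (y - x))\<^sup>2" if "i < n" for i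
  proof -
    have "(1 / real m) * (\<Sum>j<m. f i j y) \<le> (1 / real m) * ((\<Sum>j<m. f i j x) + (\<Sum>j<m. gf i j x) \<bullet> (y - x) + real m * (L / 2 * (norm (y - x))\<^sup>2))"
      using s1[OF that] by (intro mult_left_mono) auto
    then show ?thesis using m by (simp add: distrib_left)
  qed
  have "(\<Sum>i<n. (1 / real m) * (\<Sum>j<m. f i j y)) \<le> (\<Sum>i<n. (1 / real m) * (\<Sum>j<m. f i j x) + ((1 / real m) *\<^sub>R (\<Sum>j<m. gf i j x)) \<bullet> (y - x) + L / 2 * (norm (y - x))\<^sup>2)"
    by (rule sum_mono) (use s2 in auto)
  then have "(\<Sum>i<n. (1 / real m) * (\<Sum>j<m. f i j y)) \<le> (\<Sum>i<n. (1 / real m) * (\<Sum>j<m. f i j x)) + (\<Sum>i<n. (1 / real m) *\<^sub>R (\<Sum>j<m. gf i j x)) \<bullet> (y - x) + real n * (L / 2 * (norm (y - x))\<^sup>2)"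
    by (simp add: sum.distrib inner_sum_left)
  then have "(1 / real n) * (\<Sum>i<n. (1 / real m) * (\<Sum>j<m. f i j y)) \<le> (1 / real n) * ((\<Sum>i<n. (1 / real m) * (\<Sum>j<m. f i j x)) + (\<Sum>i<n. (1 / real m) *\<^sub>R (\<Sum>j<m. gf i j x)) \<bullet> (y - x) + real n * (L / 2 * (norm (y - x))\<^sup>2))"
    by (intro mult_left_mono) auto
  then show ?thesis using n unfolding F_def gF_def by (simp add: distrib_left)
qed

lemma norm_sum_sq2: "(norm (a + b :: 'a::real_normed_vector))\<^sup>2 \<le> 2 * (norm a)\<^sup>2 + 2 * (norm b)\<^sup>2"
proof -
  have "norm (a + b) \<le> norm a + norm b" by (rule norm_triangle_ineq)
  then have "(norm (a + b))\<^sup>2 \<le> (norm a + norm b)\<^sup>2" by (simp add: power_mono)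
  also have "(norm a + norm b)\<^sup>2 = 2 * (norm a)\<^sup>2 + 2 * (norm b)\<^sup>2 - (norm a - norm b)\<^sup>2"
    by (simp add: power2_eq_square algebra_simps)
  also have "\<dots> \<le> 2 * (norm a)\<^sup>2 + 2 * (norm b)\<^sup>2" by simp
  finally show ?thesis .
qed

lemma final_arith:
  fixes Fx g2 N2 D2 P T SV L \<alpha> :: real and n :: nat
  assumes n: "n \<ge> 1" and L: "L > 0" and a: "\<alpha> > 0" "\<alpha> \<le> 1 / (2 * L)"
    and D2: "D2 \<le> L\<^sup>2 / real n * P" and SV: "SV \<le> 2 * L\<^sup>2 * P + 2 * L\<^sup>2 * real n * T"
    and P: "P \<ge> 0" and T: "T \<ge> 0" and N2: "N2 \<ge> 0"
  shows "Fx - \<alpha> * ((g2 + N2 - D2) / 2) + L * \<alpha>\<^sup>2 / 2 * (N2 + (1 / real n)\<^sup>2 * SV)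
         \<le> Fx - \<alpha> / 2 * g2 - \<alpha> / 4 * N2 + \<alpha> * L\<^sup>2 / real n * P + \<alpha>\<^sup>2 * L ^ 3 / real n * T"
proof -
  define Q where "Q = \<alpha> * L\<^sup>2 / real n * P"
  have aL: "\<alpha> * L \<le> 1 / 2" using a L by (simp add: field_simps)
  have nr: "real n \<ge> 1" using n by simp
  have t1: "\<alpha> * D2 \<le> \<alpha> * (L\<^sup>2 / real n * P)"
    using D2 a by (intro mult_left_mono) auto
  have t1': "\<alpha> * (L\<^sup>2 / real n * P) = Q" by (simp add: Q_def)
  have t2: "L * \<alpha>\<^sup>2 / 2 * N2 \<le> \<alpha> / 4 * N2"
  proof -
    have "L * \<alpha>\<^sup>2 / 2 = (\<alpha> * L) * \<alpha> / 2" by (simp add: power2_eq_square)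
    also have "\<dots> \<le> (1/2) * \<alpha> / 2" using aL a by (intro divide_right_mono mult_right_mono) auto
    finally show ?thesis using N2 by (intro mult_right_mono) auto
  qed
  have t3: "L * \<alpha>\<^sup>2 / 2 * ((1 / real n)\<^sup>2 * SV) \<le> L * \<alpha>\<^sup>2 / 2 * ((1 / real n)\<^sup>2 * (2 * L\<^sup>2 * P + 2 * L\<^sup>2 * real n * T))"
    using SV L by (intro mult_left_mono) auto
  have t4: "L * \<alpha>\<^sup>2 / 2 * ((1 / real n)\<^sup>2 * (2 * L\<^sup>2 * P + 2 * L\<^sup>2 * real n * T))
      = (\<alpha> * L) / real n * Q + \<alpha>\<^sup>2 * L ^ 3 / real n * T"
    using nr unfolding Q_def by (simp add: power2_eq_square power3_eq_cube field_simps)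
  have t5: "(\<alpha> * L) / real n * Q \<le> (1 / 2) * Q"
  proof -
    have "(\<alpha> * L) / real n \<le> \<alpha> * L"
    proof -
      have "\<alpha> * L * 1 \<le> \<alpha> * L * real n" using nr a L by (intro mult_left_mono) auto
      then show ?thesis using nr by (simp add: divide_le_eq)
    qed
    then have "(\<alpha> * L) / real n \<le> 1 / 2" using aL by linarith
    moreover have "Q \<ge> 0" using a P nr unfolding Q_def by simp
    ultimately show ?thesis by (intro mult_right_mono) auto
  qed
  have e: "Fx - \<alpha> * ((g2 + N2 - D2) / 2) + L * \<alpha>\<^sup>2 / 2 * (N2 + (1 / real n)\<^sup>2 * SV)
     = Fx - \<alpha> / 2 * g2 - \<alpha> / 2 * N2 + \<alpha> * D2 / 2 + L * \<alpha>\<^sup>2 / 2 * N2 + L * \<alpha>\<^sup>2 / 2 * ((1 / real n)\<^sup>2 * SV)"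
    by (simp add: field_simps)
  have e2: "\<alpha> * L\<^sup>2 / real n * P = Q" by (simp add: Q_def)
  show ?thesis unfolding e e2 using t1 t1' t2 t3 t4 t5 by linarith
qed


lemma aux_lin: "(c::real) * d = 1 \<Longrightarrow> c * (d * F - a * A + k * B) = F - a * (c * A) + k * (c * B)"
proof -
  assume h: "c * d = 1"
  have "c * (d * F - a * A + k * B) = (c * d) * F - a * (c * A) + k * (c * B)" by (simp add: algebra_simps)
  then show ?thesis using h by simp
qed

lemma pure_bound:
  fixes f :: "nat \<Rightarrow> nat \<Rightarrow> real^'p \<Rightarrow> real" and gf :: "nat \<Rightarrow> nat \<Rightarrow> real^'p \<Rightarrow> real^'p"
    and x :: "nat \<Rightarrow> real^'p" and z :: "nat \<Rightarrow> nat \<Rightarrow> real^'p"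
  assumes n: "n \<ge> 1" and m: "m \<ge> 1" and L: "L > 0"
    and smooth: "\<And>i j x y. i < n \<Longrightarrow> j < m \<Longrightarrow> norm (gf i j x - gf i j y) \<le> L * norm (x - y)"
    and gF_def: "gF = (\<lambda>x. (1 / real n) *\<^sub>R (\<Sum>i<n. (1 / real m) *\<^sub>R (\<Sum>j<m. gf i j x)))"
    and alpha: "0 < \<alpha>" "\<alpha> \<le> 1 / (2 * L)"
  defines "xb \<equiv> avg_x n x"
    and "G \<equiv> (\<lambda>i j. gf i j (x i) - gf i j (z i j) + (1 / real m) *\<^sub>R (\<Sum>j'<m. gf i j' (z i j')))"
    and "Nb \<equiv> (1 / real n) *\<^sub>R (\<Sum>i<n. (1 / real m) *\<^sub>R (\<Sum>j<m. gf i j (x i)))"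
    and "t \<equiv> (1 / real n) * (\<Sum>i<n. (1 / real m) * (\<Sum>j<m. (norm (avg_x n x - z i j))\<^sup>2))"
  shows "(1 / real m ^ n) * (\<Sum>\<tau>\<in>PiE {..<n} (\<lambda>_. {..<m}). Fx - \<alpha> * (gF xb \<bullet> ((1 / real n) *\<^sub>R (\<Sum>i<n. G i (\<tau> i))))
              + L * \<alpha>\<^sup>2 / 2 * (norm ((1 / real n) *\<^sub>R (\<Sum>i<n. G i (\<tau> i))))\<^sup>2)
     \<le> Fx - \<alpha> / 2 * (norm (gF xb))\<^sup>2 - \<alpha> / 4 * (norm Nb)\<^sup>2
        + \<alpha> * L\<^sup>2 / real n * (\<Sum>i<n. (norm (x i - xb))\<^sup>2) + \<alpha>\<^sup>2 * L ^ 3 / real n * t"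
proof -
  let ?T = "PiE {..<n} (\<lambda>_. {..<m::nat})"
  have t_eq: "t = (1 / real n) * (\<Sum>i<n. (1 / real m) * (\<Sum>j<m. (norm (xb - z i j))\<^sup>2))"
    unfolding t_def xb_def ..
  let ?gb = "\<lambda>\<tau>. (1 / real n) *\<^sub>R (\<Sum>i<n. G i (\<tau> i))"
  define \<mu>i where "\<mu>i = (\<lambda>i. (1 / real m) *\<^sub>R (\<Sum>j<m. G i j))"
  define c where "c = (\<lambda>i. (1 / real m) *\<^sub>R (\<Sum>j'<m. gf i j' (z i j')))"
  define P where "P = (\<Sum>i<n. (norm (x i - xb))\<^sup>2)"
  have mpos: "real m > 0" using m by simp
  have npos: "real n > 0" using n by simp
  have cardT: "real (card ?T) = real m ^ n" by (simp add: card_PiE)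
  have SG: "(\<Sum>j<m. G i j) = (\<Sum>j<m. gf i j (x i))" for i
  proof -
    have "(\<Sum>j<m. G i j) = (\<Sum>j<m. gf i j (x i)) - (\<Sum>j<m. gf i j (z i j)) + real m *\<^sub>R c i"
    proof -
      have G_c: "G i j = gf i j (x i) - gf i j (z i j) + c i" for j unfolding G_def c_def ..
      show ?thesis by (simp add: G_c sum.distrib sum_subtractf sum_constant_scaleR del: sum_constant)
    qed
    also have "real m *\<^sub>R c i = (\<Sum>j<m. gf i j (z i j))" using mpos unfolding c_def by (simp only: scaleR_scaleR) simp
    finally show ?thesis by simp
  qed
  have mu_eq: "(1 / real n) *\<^sub>R (\<Sum>i<n. \<mu>i i) = Nb" unfolding \<mu>i_def Nb_def SG ..
  have split: "(1 / real m ^ n) * (\<Sum>\<tau>\<in>?T. Fx - \<alpha> * (gF xb \<bullet> ?gb \<tau>) + L * \<alpha>\<^sup>2 / 2 * (norm (?gb \<tau>))\<^sup>2)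
      = Fx - \<alpha> * ((1 / real m ^ n) * (\<Sum>\<tau>\<in>?T. gF xb \<bullet> ?gb \<tau>)) + L * \<alpha>\<^sup>2 / 2 * ((1 / real m ^ n) * (\<Sum>\<tau>\<in>?T. (norm (?gb \<tau>))\<^sup>2))"
  proof -
    have "(\<Sum>\<tau>\<in>?T. Fx - \<alpha> * (gF xb \<bullet> ?gb \<tau>) + L * \<alpha>\<^sup>2 / 2 * (norm (?gb \<tau>))\<^sup>2)
        = real (card ?T) * Fx - \<alpha> * (\<Sum>\<tau>\<in>?T. gF xb \<bullet> ?gb \<tau>) + L * \<alpha>\<^sup>2 / 2 * (\<Sum>\<tau>\<in>?T. (norm (?gb \<tau>))\<^sup>2)"
      by (simp add: sum.distrib sum_subtractf sum_distrib_left)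
    moreover have "(1 / real m ^ n) * real m ^ n = 1" using mpos by simp
    ultimately show ?thesis unfolding cardT by (simp only: aux_lin)
  qed
  have avgB: "(1 / real m ^ n) * (\<Sum>\<tau>\<in>?T. gF xb \<bullet> ?gb \<tau>) = gF xb \<bullet> Nb"
    using avg_TT_inner[OF n m, of "gF xb" G] mu_eq unfolding \<mu>i_def by simp
  define V where "V = (\<lambda>i. (1 / real m) * (\<Sum>j<m. (norm (G i j))\<^sup>2) - (norm (\<mu>i i))\<^sup>2)"
  have avgC: "(1 / real m ^ n) * (\<Sum>\<tau>\<in>?T. (norm (?gb \<tau>))\<^sup>2) = (norm Nb)\<^sup>2 + (1 / real n)\<^sup>2 * (\<Sum>i<n. V i)"
    using avg_TT_sq[OF n m, of G] mu_eq unfolding \<mu>i_def V_def by simp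
  have Vb: "V i \<le> 2 * L\<^sup>2 * (norm (x i - xb))\<^sup>2 + 2 * L\<^sup>2 * ((1 / real m) * (\<Sum>j<m. (norm (xb - z i j))\<^sup>2))" if "i < n" for i
  proof -
    have "V i \<le> (1 / real m) * (\<Sum>j<m. (norm (G i j - c i))\<^sup>2)"
      unfolding V_def \<mu>i_def by (rule var_le[OF m])
    also have "\<dots> \<le> (1 / real m) * (\<Sum>j<m. 2 * L\<^sup>2 * (norm (x i - xb))\<^sup>2 + 2 * L\<^sup>2 * (norm (xb - z i j))\<^sup>2)"
    proof (intro mult_left_mono sum_mono)
      fix j assume j: "j \<in> {..<m}"
      have "G i j - c i = gf i j (x i) - gf i j (z i j)" unfolding G_def c_def by simp
      then have "norm (G i j - c i) \<le> L * norm (x i - z i j)" using smooth[OF that] j by simp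
      then have "(norm (G i j - c i))\<^sup>2 \<le> (L * norm (x i - z i j))\<^sup>2" by (simp add: power_mono)
      also have "\<dots> = L\<^sup>2 * (norm ((x i - xb) + (xb - z i j)))\<^sup>2" by (simp add: power_mult_distrib)
      also have "\<dots> \<le> L\<^sup>2 * (2 * (norm (x i - xb))\<^sup>2 + 2 * (norm (xb - z i j))\<^sup>2)"
        by (intro mult_left_mono norm_sum_sq2) auto
      finally show "(norm (G i j - c i))\<^sup>2 \<le> 2 * L\<^sup>2 * (norm (x i - xb))\<^sup>2 + 2 * L\<^sup>2 * (norm (xb - z i j))\<^sup>2"
        by (simp add: algebra_simps)
    qed simp
    also have "\<dots> = 2 * L\<^sup>2 * (norm (x i - xb))\<^sup>2 + 2 * L\<^sup>2 * ((1 / real m) * (\<Sum>j<m. (norm (xb - z i j))\<^sup>2))"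
      using mpos by (simp add: sum.distrib sum_distrib_left[symmetric] field_simps)
    finally show ?thesis .
  qed
  have SV: "(\<Sum>i<n. V i) \<le> 2 * L\<^sup>2 * P + 2 * L\<^sup>2 * real n * t"
  proof -
    have "(\<Sum>i<n. V i) \<le> (\<Sum>i<n. 2 * L\<^sup>2 * (norm (x i - xb))\<^sup>2 + 2 * L\<^sup>2 * ((1 / real m) * (\<Sum>j<m. (norm (xb - z i j))\<^sup>2)))"
      by (rule sum_mono) (use Vb in auto)
    also have "\<dots> = 2 * L\<^sup>2 * P + 2 * L\<^sup>2 * real n * t"
      unfolding P_def t_eq using npos by (simp add: sum.distrib sum_distrib_left mult.assoc)
    finally show ?thesis .
  qed
  have D2: "(norm (gF xb - Nb))\<^sup>2 \<le> L\<^sup>2 / real n * P"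
  proof -
    define w where "w = (\<lambda>i. (1 / real m) *\<^sub>R (\<Sum>j<m. gf i j xb - gf i j (x i)))"
    have "gF xb - Nb = (1 / real n) *\<^sub>R (\<Sum>i<n. w i)"
      unfolding gF_def Nb_def w_def by (simp add: scaleR_diff_right sum_subtractf)
    then have "(norm (gF xb - Nb))\<^sup>2 \<le> (1 / real n) * (\<Sum>i<n. (norm (w i))\<^sup>2)"
      using norm_avg_sq[OF n, of w] by simp
    also have "\<dots> \<le> (1 / real n) * (\<Sum>i<n. L\<^sup>2 * (norm (x i - xb))\<^sup>2)"
    proof (intro mult_left_mono sum_mono)
      fix i assume i: "i \<in> {..<n}"
      have "(norm (w i))\<^sup>2 \<le> (1 / real m) * (\<Sum>j<m. (norm (gf i j xb - gf i j (x i)))\<^sup>2)"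
        unfolding w_def by (rule norm_avg_sq[OF m])
      also have "\<dots> \<le> (1 / real m) * (\<Sum>j<m. L\<^sup>2 * (norm (x i - xb))\<^sup>2)"
      proof (intro mult_left_mono sum_mono)
        fix j assume j: "j \<in> {..<m}"
        have "norm (gf i j xb - gf i j (x i)) \<le> L * norm (x i - xb)"
          using smooth[of i j xb "x i"] i j by (simp add: norm_minus_commute)
        then show "(norm (gf i j xb - gf i j (x i)))\<^sup>2 \<le> L\<^sup>2 * (norm (x i - xb))\<^sup>2"
          by (metis norm_ge_zero power_mono power_mult_distrib)
      qed simp
      also have "\<dots> = L\<^sup>2 * (norm (x i - xb))\<^sup>2" using mpos by simp
      finally show "(norm (w i))\<^sup>2 \<le> L\<^sup>2 * (norm (x i - xb))\<^sup>2" .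
    qed simp
    also have "\<dots> = L\<^sup>2 / real n * P" unfolding P_def by (simp add: sum_distrib_left)
    finally show ?thesis .
  qed
  have pol: "gF xb \<bullet> Nb = ((norm (gF xb))\<^sup>2 + (norm Nb)\<^sup>2 - (norm (gF xb - Nb))\<^sup>2) / 2"
    by (simp add: power2_norm_eq_inner inner_diff_left inner_diff_right inner_commute)
  have P0: "P \<ge> 0" unfolding P_def by (simp add: sum_nonneg)
  have t0: "t \<ge> 0" unfolding t_eq using npos mpos by (simp add: sum_nonneg)
  show ?thesis
    unfolding split avgB avgC pol P_def[symmetric]
    by (rule final_arith[OF n L alpha D2 SV P0 t0]) simp
qed

lemma space_gt: "space (gt_space n m) = UNIV"
  unfolding gt_space_def by (simp add: space_PiM)

lemma indep_coords:
  "prob_space.indep_vars (gt_space n m) (\<lambda>_. measure_pmf (draw_pmf n m)) (\<lambda>i \<omega>. \<omega> i) UNIV"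
proof -
  interpret prob_space "gt_space n m" by (rule prob_space_gt)
  have rv: "random_variable (measure_pmf (draw_pmf n m)) (\<lambda>\<omega>. \<omega> i)" for i
    unfolding gt_space_def by (rule measurable_component_singleton) simp
  have d: "distr (gt_space n m) (measure_pmf (draw_pmf n m)) (\<lambda>\<omega>. \<omega> i) = measure_pmf (draw_pmf n m)" for i
    unfolding gt_space_def by (rule distr_PiM_component) (auto intro: prob_space_measure_pmf)
  show ?thesis
  proof (subst indep_vars_iff_distr_eq_PiM[OF _ rv])
    show "distr (gt_space n m) (\<Pi>\<^sub>M i\<in>UNIV. measure_pmf (draw_pmf n m)) (\<lambda>x. \<lambda>i\<in>UNIV. x i) =
        (\<Pi>\<^sub>M i\<in>UNIV. distr (gt_space n m) (measure_pmf (draw_pmf n m)) (\<lambda>\<omega>. \<omega> i))"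
    proof -
      have r: "(\<lambda>x. \<lambda>i\<in>UNIV. x i) = (\<lambda>x::nat \<Rightarrow> draw. x)" by (auto simp: restrict_def fun_eq_iff)
      show ?thesis unfolding d r unfolding gt_space_def by (rule distr_id)
    qed
  qed simp
qed

lemma prob_coord:
  "measure (gt_space n m) {\<omega>. \<omega> k \<in> C} = measure (measure_pmf (draw_pmf n m)) C"
proof -
  have mc: "(\<lambda>\<omega>. \<omega> k) \<in> measurable (gt_space n m) (measure_pmf (draw_pmf n m))"
    unfolding gt_space_def by (rule measurable_component_singleton) simp
  have d: "distr (gt_space n m) (measure_pmf (draw_pmf n m)) (\<lambda>\<omega>. \<omega> k) = measure_pmf (draw_pmf n m)"
    unfolding gt_space_def by (rule distr_PiM_component) (auto intro: prob_space_measure_pmf)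
  have "measure (measure_pmf (draw_pmf n m)) C = measure (gt_space n m) ((\<lambda>\<omega>. \<omega> k) -` C \<inter> space (gt_space n m))"
    by (subst d[symmetric], rule measure_distr[OF mc]) simp
  then show ?thesis by (simp add: space_gt vimage_def)
qed

lemma indep_meas:
  assumes A: "A \<in> sets (gt_filt n m k)"
  shows "measure (gt_space n m) (A \<inter> {\<omega>. \<omega> k \<in> C}) = measure (gt_space n m) A * measure (measure_pmf (draw_pmf n m)) C"
proof -
  interpret prob_space "gt_space n m" by (rule prob_space_gt)
  let ?P = "measure_pmf (draw_pmf n m)"
  have "(\<lambda>\<omega>. restrict \<omega> {..<k}) \<in> space (gt_space n m) \<rightarrow> space (PiM {..<k} (\<lambda>_. ?P))"
    by (auto simp: space_PiM)
  then obtain B where B: "B \<in> sets (PiM {..<k} (\<lambda>_. ?P))" and AB: "A = (\<lambda>\<omega>. restrict \<omega> {..<k}) -` B \<inter> space (gt_space n m)"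
    using A unfolding gt_filt_def gt_space_def[symmetric] by (auto simp: sets_vimage_algebra2)
  have iv: "indep_var (PiM {..<k} (\<lambda>_. ?P)) (\<lambda>\<omega>. restrict (\<lambda>i. \<omega> i) {..<k}) (PiM {k} (\<lambda>_. ?P)) (\<lambda>\<omega>. restrict (\<lambda>i. \<omega> i) {k})"
    by (rule indep_var_restrict[OF indep_coords]) auto
  define Cs where "Cs = {\<rho> \<in> space (PiM {k} (\<lambda>_. ?P)). \<rho> k \<in> C}"
  have Cs: "Cs \<in> sets (PiM {k} (\<lambda>_. ?P))"
  proof -
    have "(\<lambda>\<rho>. \<rho> k) \<in> measurable (PiM {k} (\<lambda>_. ?P)) ?P" by (rule measurable_component_singleton) simp
    then have "(\<lambda>\<rho>. \<rho> k) -` C \<inter> space (PiM {k} (\<lambda>_. ?P)) \<in> sets (PiM {k} (\<lambda>_. ?P))"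
      by (rule measurable_sets) simp
    then show ?thesis unfolding Cs_def by (simp add: vimage_def Int_def conj_commute)
  qed
  have "prob ((\<lambda>x. (restrict (\<lambda>i. x i) {..<k}, restrict (\<lambda>i. x i) {k})) -` (B \<times> Cs) \<inter> space (gt_space n m)) =
    prob ((\<lambda>x. restrict (\<lambda>i. x i) {..<k}) -` B \<inter> space (gt_space n m)) * prob ((\<lambda>x. restrict (\<lambda>i. x i) {k}) -` Cs \<inter> space (gt_space n m))"
    by (rule indep_varD[OF iv B Cs])
  moreover have "(\<lambda>x. (restrict (\<lambda>i. x i) {..<k}, restrict (\<lambda>i. x i) {k})) -` (B \<times> Cs) \<inter> space (gt_space n m) = A \<inter> {\<omega>. \<omega> k \<in> C}"
    unfolding AB Cs_def by (auto simp: space_PiM space_gt)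
  moreover have "(\<lambda>x. restrict (\<lambda>i. x i) {k}) -` Cs \<inter> space (gt_space n m) = {\<omega>. \<omega> k \<in> C}"
    unfolding Cs_def by (auto simp: space_PiM space_gt)
  moreover have "(\<lambda>x. restrict (\<lambda>i. x i) {..<k}) -` B \<inter> space (gt_space n m) = A" unfolding AB by simp
  ultimately show ?thesis using prob_coord[of n m k C] by simp
qed

lemma prob_S:
  assumes m: "m \<ge> 1" and \<tau>: "\<tau> \<in> PiE {..<n} (\<lambda>_. {..<m})"
  shows "measure (measure_pmf (draw_pmf n m)) {d. \<forall>i<n. fst d i = \<tau> i} = 1 / real m ^ n"
proof -
  let ?T = "PiE {..<n} (\<lambda>_. {..<m})"
  have ne: "?T \<noteq> {}" using m by (auto simp: PiE_eq_empty_iff lessThan_empty_iff)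
  have fin: "finite ?T" by (simp add: finite_PiE)
  have cT: "card ?T = m ^ n" by (simp add: card_PiE)
  have "?T \<times> ?T \<inter> {d. \<forall>i<n. fst d i = \<tau> i} = {\<tau>} \<times> ?T"
  proof (safe)
    fix a b assume a: "a \<in> ?T" and "\<forall>i<n. fst (a, b) i = \<tau> i"
    then have "\<forall>i\<in>{..<n}. a i = \<tau> i" by simp
    then show "a = \<tau>" using a \<tau> by (intro PiE_ext) auto
  qed (use \<tau> in auto)
  then have "card (?T \<times> ?T \<inter> {d. \<forall>i<n. fst d i = \<tau> i}) = m ^ n" by (simp add: card_cartesian_product cT)
  moreover have "card (?T \<times> ?T) = m ^ n * m ^ n" by (simp add: card_cartesian_product cT)
  moreover have "measure (measure_pmf (draw_pmf n m)) {d. \<forall>i<n. fst d i = \<tau> i}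
      = real (card (?T \<times> ?T \<inter> {d. \<forall>i<n. fst d i = \<tau> i})) / real (card (?T \<times> ?T))"
    unfolding draw_pmf_def using ne fin by (subst measure_pmf_of_set) auto
  ultimately show ?thesis using m by simp
qed

lemma ce_ind:
  assumes m: "m \<ge> 1" and \<tau>: "\<tau> \<in> PiE {..<n} (\<lambda>_. {..<m})"
  shows "AE \<omega> in gt_space n m. real_cond_exp (gt_space n m) (gt_filt n m k) (indicator {\<omega>. \<forall>i<n. fst (\<omega> k) i = \<tau> i}) \<omega> = 1 / real m ^ n"
proof -
  interpret prob_space "gt_space n m" by (rule prob_space_gt)
  interpret sigma_finite_subalgebra "gt_space n m" "gt_filt n m k" by (rule sfs_filt)
  define E where "E = {\<omega>::nat \<Rightarrow> draw. \<forall>i<n. fst (\<omega> k) i = \<tau> i}"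
  have E: "E = {\<omega>. \<omega> k \<in> {d. \<forall>i<n. fst d i = \<tau> i}}" unfolding E_def by simp
  have Es: "E \<in> sets (gt_space n m)"
  proof -
    have "(\<lambda>\<omega>. \<omega> k) \<in> measurable (gt_space n m) (measure_pmf (draw_pmf n m))"
      unfolding gt_space_def by (rule measurable_component_singleton) simp
    then have "(\<lambda>\<omega>. \<omega> k) -` {d. \<forall>i<n. fst d i = \<tau> i} \<inter> space (gt_space n m) \<in> sets (gt_space n m)"
      by (rule measurable_sets) simp
    then show ?thesis unfolding E by (simp add: space_gt vimage_def)
  qed
  have intE: "integrable (gt_space n m) (indicator E :: _ \<Rightarrow> real)"
    by (rule integrable_gen[OF m, of n "Suc k"]) (auto simp: agree_def E_def indicator_def)
  have "AE \<omega> in gt_space n m. real_cond_exp (gt_space n m) (gt_filt n m k) (indicator E) \<omega> = 1 / real m ^ n"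
  proof (rule real_cond_exp_charact)
    fix A assume A: "A \<in> sets (gt_filt n m k)"
    have As: "A \<in> sets (gt_space n m)" using subalg_filt[of n m k] A unfolding subalgebra_def by blast
    have "(\<integral>x\<in>A. indicator E x \<partial>gt_space n m) = (\<integral>x. indicator (A \<inter> E) x \<partial>gt_space n m)"
      unfolding set_lebesgue_integral_def by (intro Bochner_Integration.integral_cong) (auto simp: indicator_def)
    also have "\<dots> = measure (gt_space n m) (A \<inter> E)" using As Es by simp
    also have "\<dots> = measure (gt_space n m) A * (1 / real m ^ n)"
      unfolding E using indep_meas[OF A, of "{d. \<forall>i<n. fst d i = \<tau> i}"] prob_S[OF m \<tau>] by simp
    also have "\<dots> = (\<integral>x\<in>A. 1 / real m ^ n \<partial>gt_space n m)" using As by (subst set_integral_const) auto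
    finally show "(\<integral>x\<in>A. indicator E x \<partial>gt_space n m) = (\<integral>x\<in>A. 1 / real m ^ n \<partial>gt_space n m)" .
  qed (auto simp: intE)
  then show ?thesis unfolding E_def .
qed

definition Qd :: "nat \<Rightarrow> nat \<Rightarrow> real \<Rightarrow> real \<Rightarrow> (real^'p \<Rightarrow> real) \<Rightarrow> (real^'p \<Rightarrow> real^'p)
   \<Rightarrow> (nat \<Rightarrow> nat \<Rightarrow> real^'p \<Rightarrow> real^'p) \<Rightarrow> 'p gt_state \<Rightarrow> draw \<Rightarrow> real" where
  "Qd n m L \<alpha> F gF gf s d = F (avg_x n (fst s)) - \<alpha> * (gF (avg_x n (fst s)) \<bullet> gbar n m gf s d)
      + L * \<alpha>\<^sup>2 / 2 * (norm (gbar n m gf s d))\<^sup>2"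

lemma saga_grad_fst: "saga_grad m gf s d = saga_grad m gf s (fst d, fst d)"
proof -
  obtain x y z gp where s: "s = (x, y, z, gp)" by (cases s) auto
  show ?thesis unfolding s by (rule ext) (simp only: saga_grad_eq fst_conv)
qed

lemma gbar_fst: "gbar n m gf s d = gbar n m gf s (fst d, fst d)"
  unfolding gbar_def by (subst saga_grad_fst) (rule refl)

lemma gbar_cong: "simst n s s' \<Longrightarrow> gbar n m gf s d = gbar n m gf s' d"
  unfolding gbar_def by (intro arg_cong[where f="\<lambda>v. (1 / real n) *\<^sub>R v"] sum.cong refl saga_grad_cong) auto

lemma avgx_cong: "simst n s s' \<Longrightarrow> avg_x n (fst s) = avg_x n (fst s')"
  unfolding avg_x_def simst_def by (intro arg_cong[where f="\<lambda>v. (1 / real n) *\<^sub>R v"] sum.cong refl) auto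

lemma Qd_cong: assumes h: "simst n s s'" shows "Qd n m L \<alpha> F gF gf s d = Qd n m L \<alpha> F gF gf s' d"
  unfolding Qd_def by (simp only: gbar_cong[OF h] avgx_cong[OF h])

lemma Qd_fst: "Qd n m L \<alpha> F gF gf s d = Qd n m L \<alpha> F gF gf s (fst d, fst d)"
  unfolding Qd_def gbar_fst[of n m gf s d] ..

lemma agree_Suc: "agree n (Suc k) \<omega> \<omega>' \<Longrightarrow> agree n k \<omega> \<omega>'"
  by (simp add: agree_def)

lemma Qd_pure:
  "Qd n m L \<alpha> F gF gf (x, y, z, gp) (\<tau>, \<tau>) =
    F (avg_x n x) - \<alpha> * (gF (avg_x n x) \<bullet> ((1 / real n) *\<^sub>R (\<Sum>i<n. (\<lambda>i j. gf i j (x i) - gf i j (z i j) + (1 / real m) *\<^sub>R (\<Sum>j'<m. gf i j' (z i j'))) i (\<tau> i))))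
    + L * \<alpha>\<^sup>2 / 2 * (norm ((1 / real n) *\<^sub>R (\<Sum>i<n. (\<lambda>i j. gf i j (x i) - gf i j (z i j) + (1 / real m) *\<^sub>R (\<Sum>j'<m. gf i j' (z i j'))) i (\<tau> i))))\<^sup>2"
proof -
  have h: "saga_grad m gf (x, y, z, gp) (\<tau>, \<tau>) = (\<lambda>i. (\<lambda>i j. gf i j (x i) - gf i j (z i j) + (1 / real m) *\<^sub>R (\<Sum>j'<m. gf i j' (z i j'))) i (\<tau> i))"
    by (rule ext) (simp only: saga_grad_eq fst_conv)
  show ?thesis unfolding Qd_def gbar_def h by simp
qed

theorem lemma4:
  fixes n m :: nat and L \<alpha> :: real
    and f :: "nat \<Rightarrow> nat \<Rightarrow> real^'p \<Rightarrow> real"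
    and gf :: "nat \<Rightarrow> nat \<Rightarrow> real^'p \<Rightarrow> real^'p"
    and W :: "nat \<Rightarrow> nat \<Rightarrow> real" and x0 :: "real^'p"
    and F :: "real^'p \<Rightarrow> real" and gF :: "real^'p \<Rightarrow> real^'p"
    and k :: nat
  assumes n: "n \<ge> 1" and m: "m \<ge> 1" and L: "L > 0"
    and grad: "\<And>i j x. i < n \<Longrightarrow> j < m \<Longrightarrow> (f i j has_derivative (\<lambda>h. gf i j x \<bullet> h)) (at x)"
    and smooth: "\<And>i j x y. i < n \<Longrightarrow> j < m \<Longrightarrow> norm (gf i j x - gf i j y) \<le> L * norm (x - y)"
    and F_def: "F = (\<lambda>x. (1 / real n) * (\<Sum>i<n. (1 / real m) * (\<Sum>j<m. f i j x)))"
    and gF_def: "gF = (\<lambda>x. (1 / real n) *\<^sub>R (\<Sum>i<n. (1 / real m) *\<^sub>R (\<Sum>j<m. gf i j x)))"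
    and Fstar: "bdd_below (range F)"
    and W_ds: "doubly_stochastic n W" and W_prim: "primitive_mat n W"
    and alpha: "0 < \<alpha>" "\<alpha> \<le> 1 / (2 * L)"
  shows "AE \<omega> in gt_space n m.
     real_cond_exp (gt_space n m) (gt_filt n m k)
       (\<lambda>\<omega>. F (avg_x n (fst (gt_saga n m W \<alpha> gf x0 (Suc k) \<omega>)))) \<omega>
     \<le> (let (x, y, z, gp) = gt_saga n m W \<alpha> gf x0 k \<omega>;
             xb = avg_x n x;
             t = (1 / real n) * (\<Sum>i<n. (1 / real m) * (\<Sum>j<m. (norm (xb - z i j))\<^sup>2))
         in F xb - \<alpha> / 2 * (norm (gF xb))\<^sup>2
            - \<alpha> / 4 * (norm ((1 / real n) *\<^sub>R (\<Sum>i<n. (1 / real m) *\<^sub>R (\<Sum>j<m. gf i j (x i)))))\<^sup>2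
            + \<alpha> * L\<^sup>2 / real n * (\<Sum>i<n. (norm (x i - xb))\<^sup>2)
            + \<alpha>\<^sup>2 * L ^ 3 / real n * t)"
proof -
  interpret P: prob_space "gt_space n m" by (rule prob_space_gt)
  interpret S: sigma_finite_subalgebra "gt_space n m" "gt_filt n m k" by (rule sfs_filt)
  let ?M = "gt_space n m"
  let ?Fk = "gt_filt n m k"
  let ?T = "PiE {..<n} (\<lambda>_. {..<m})"
  define St where "St = (\<lambda>\<omega>. gt_saga n m W \<alpha> gf x0 k \<omega>)"
  define \<Phi> where "\<Phi> = (\<lambda>\<omega>. F (avg_x n (fst (gt_saga n m W \<alpha> gf x0 (Suc k) \<omega>))))"
  define E where "E = (\<lambda>\<tau>. {\<omega>::nat \<Rightarrow> draw. \<forall>i<n. fst (\<omega> k) i = \<tau> i})"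
  define Qt where "Qt = (\<lambda>\<tau> \<omega>. Qd n m L \<alpha> F gF gf (St \<omega>) (\<tau>, \<tau>))"
  define f\<tau> where "f\<tau> = (\<lambda>\<tau> \<omega>. Qt \<tau> \<omega> * indicator (E \<tau>) \<omega>)"
  define \<Psi> where "\<Psi> = (\<lambda>\<omega>. \<Sum>\<tau>\<in>?T. f\<tau> \<tau> \<omega>)"
  define RHS where "RHS = (\<lambda>\<omega>. (let (x, y, z, gp) = St \<omega>;
             xb = avg_x n x;
             t = (1 / real n) * (\<Sum>i<n. (1 / real m) * (\<Sum>j<m. (norm (xb - z i j))\<^sup>2))
         in F xb - \<alpha> / 2 * (norm (gF xb))\<^sup>2
            - \<alpha> / 4 * (norm ((1 / real n) *\<^sub>R (\<Sum>i<n. (1 / real m) *\<^sub>R (\<Sum>j<m. gf i j (x i)))))\<^sup>2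
            + \<alpha> * L\<^sup>2 / real n * (\<Sum>i<n. (norm (x i - xb))\<^sup>2)
            + \<alpha>\<^sup>2 * L ^ 3 / real n * t))"
  have St_inv: "simst n (St \<omega>) (St \<omega>')" if "agree n k \<omega> \<omega>'" for \<omega> \<omega>'
    unfolding St_def using that by (rule saga_cong)
  have Qt_inv: "Qt \<tau> \<omega> = Qt \<tau> \<omega>'" if "agree n k \<omega> \<omega>'" for \<tau> \<omega> \<omega>'
    unfolding Qt_def by (rule Qd_cong[OF St_inv[OF that]])
  have E_inv: "indicator (E \<tau>) \<omega> = (indicator (E \<tau>) \<omega>' :: real)" if "agree n (Suc k) \<omega> \<omega>'" for \<tau> \<omega> \<omega>'
    using that by (auto simp: agree_def E_def indicator_def)
  have f_inv: "f\<tau> \<tau> \<omega> = f\<tau> \<tau> \<omega>'" if "agree n (Suc k) \<omega> \<omega>'" for \<tau> \<omega> \<omega>'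
    unfolding f\<tau>_def using Qt_inv[OF agree_Suc[OF that]] E_inv[OF that] by simp
  have \<Phi>_inv: "\<Phi> \<omega> = \<Phi> \<omega>'" if "agree n (Suc k) \<omega> \<omega>'" for \<omega> \<omega>'
  proof -
    have "simst n (gt_saga n m W \<alpha> gf x0 (Suc k) \<omega>) (gt_saga n m W \<alpha> gf x0 (Suc k) \<omega>')"
      by (rule saga_cong[OF that])
    then show ?thesis unfolding \<Phi>_def by (simp only: avgx_cong)
  qed
  have int\<Phi>: "integrable ?M \<Phi>" by (rule integrable_gen[OF m \<Phi>_inv])
  have intf: "integrable ?M (f\<tau> \<tau>)" for \<tau> by (rule integrable_gen[OF m f_inv])
  have int\<Psi>: "integrable ?M \<Psi>" unfolding \<Psi>_def by (intro Bochner_Integration.integrable_sum intf)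
  have desc: "\<Phi> \<omega> \<le> Qd n m L \<alpha> F gF gf (St \<omega>) (\<omega> k)" for \<omega>
  proof -
    let ?xb = "avg_x n (fst (St \<omega>))"
    let ?g = "gbar n m gf (St \<omega>) (\<omega> k)"
    have a: "avg_x n (fst (gt_saga n m W \<alpha> gf x0 (Suc k) \<omega>)) = ?xb - \<alpha> *\<^sub>R ?g"
      unfolding St_def by (rule avg_step[OF W_ds n])
    have "F (?xb - \<alpha> *\<^sub>R ?g) \<le> F ?xb + gF ?xb \<bullet> ((?xb - \<alpha> *\<^sub>R ?g) - ?xb) + L / 2 * (norm ((?xb - \<alpha> *\<^sub>R ?g) - ?xb))\<^sup>2"
      by (rule F_descent[OF n m grad smooth F_def gF_def])
    also have "\<dots> = Qd n m L \<alpha> F gF gf (St \<omega>) (\<omega> k)"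
      using alpha(1) unfolding Qd_def by (simp add: power_mult_distrib)
    finally show ?thesis unfolding \<Phi>_def a .
  qed
  have ae_eq: "AE \<omega> in ?M. Qd n m L \<alpha> F gF gf (St \<omega>) (\<omega> k) = \<Psi> \<omega>"
    using AE_support[OF m]
  proof eventually_elim
    case (elim \<omega>)
    have \<omega>k: "\<omega> k \<in> ?T \<times> ?T" using elim[rule_format, of k] set_draw_pmf[OF m] by simp
    define \<tau>0 where "\<tau>0 = fst (\<omega> k)"
    have \<tau>0: "\<tau>0 \<in> ?T" using \<omega>k unfolding \<tau>0_def by (simp add: mem_Times_iff)
    have ind: "indicator (E \<tau>) \<omega> = (if \<tau> = \<tau>0 then 1 else 0::real)" if "\<tau> \<in> ?T" for \<tau>
    proof -
      have "(\<forall>i<n. \<tau>0 i = \<tau> i) \<longleftrightarrow> \<tau> = \<tau>0"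
      proof
        assume "\<forall>i<n. \<tau>0 i = \<tau> i"
        then show "\<tau> = \<tau>0" using that \<tau>0 by (intro PiE_ext) auto
      qed auto
      then show ?thesis unfolding E_def \<tau>0_def indicator_def by auto
    qed
    have "\<Psi> \<omega> = (\<Sum>\<tau>\<in>?T. if \<tau> = \<tau>0 then Qt \<tau> \<omega> else 0)"
      unfolding \<Psi>_def f\<tau>_def by (intro sum.cong refl) (simp add: ind)
    also have "\<dots> = Qt \<tau>0 \<omega>" using \<tau>0 by (simp add: sum.delta finite_PiE)
    also have "\<dots> = Qd n m L \<alpha> F gF gf (St \<omega>) (\<omega> k)" unfolding Qt_def \<tau>0_def by (rule Qd_fst[symmetric])
    finally show ?case by simp
  qed
  have ae_le: "AE \<omega> in ?M. \<Phi> \<omega> \<le> \<Psi> \<omega>"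
    using ae_eq
  proof eventually_elim
    case (elim \<omega>)
    show ?case using desc[of \<omega>] elim by simp
  qed
  have c1: "AE \<omega> in ?M. real_cond_exp ?M ?Fk \<Phi> \<omega> \<le> real_cond_exp ?M ?Fk \<Psi> \<omega>"
    by (rule S.real_cond_exp_mono[OF ae_le int\<Phi> int\<Psi>])
  have c2: "AE \<omega> in ?M. real_cond_exp ?M ?Fk \<Psi> \<omega> = (\<Sum>\<tau>\<in>?T. real_cond_exp ?M ?Fk (f\<tau> \<tau>) \<omega>)"
    unfolding \<Psi>_def by (rule S.real_cond_exp_sum) (rule intf)
  have c3: "AE \<omega> in ?M. \<forall>\<tau>\<in>?T. real_cond_exp ?M ?Fk (f\<tau> \<tau>) \<omega> = Qt \<tau> \<omega> * (1 / real m ^ n)"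
  proof (rule eventually_ball_finite)
    show "finite ?T" by (simp add: finite_PiE)
    show "\<forall>\<tau>\<in>?T. AE \<omega> in ?M. real_cond_exp ?M ?Fk (f\<tau> \<tau>) \<omega> = Qt \<tau> \<omega> * (1 / real m ^ n)"
    proof
      fix \<tau> assume \<tau>: "\<tau> \<in> ?T"
      have mQ: "Qt \<tau> \<in> borel_measurable ?Fk" by (rule filt_meas) (rule Qt_inv)
      have mI: "(indicator (E \<tau>) :: _ \<Rightarrow> real) \<in> borel_measurable ?M"
        by (rule borel_measurable_integrable[OF integrable_gen[OF m E_inv]])
      have a1: "AE \<omega> in ?M. real_cond_exp ?M ?Fk (\<lambda>\<omega>. Qt \<tau> \<omega> * indicator (E \<tau>) \<omega>) \<omega> = Qt \<tau> \<omega> * real_cond_exp ?M ?Fk (indicator (E \<tau>)) \<omega>"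
        by (rule S.real_cond_exp_mult[OF mQ mI]) (use intf[of \<tau>] in \<open>simp add: f\<tau>_def\<close>)
      have a2: "AE \<omega> in ?M. real_cond_exp ?M ?Fk (indicator (E \<tau>)) \<omega> = 1 / real m ^ n"
        unfolding E_def by (rule ce_ind[OF m \<tau>])
      show "AE \<omega> in ?M. real_cond_exp ?M ?Fk (f\<tau> \<tau>) \<omega> = Qt \<tau> \<omega> * (1 / real m ^ n)"
        using a1 a2 by eventually_elim (simp add: f\<tau>_def)
    qed
  qed
  have pw: "(\<Sum>\<tau>\<in>?T. Qt \<tau> \<omega> * (1 / real m ^ n)) \<le> RHS \<omega>" for \<omega>
  proof -
    obtain x y z gp where s: "St \<omega> = (x, y, z, gp)" by (cases "St \<omega>") auto
    have "(\<Sum>\<tau>\<in>?T. Qt \<tau> \<omega> * (1 / real m ^ n)) = (1 / real m ^ n) * (\<Sum>\<tau>\<in>?T. Qd n m L \<alpha> F gF gf (x, y, z, gp) (\<tau>, \<tau>))"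
      unfolding Qt_def s by (simp add: sum_distrib_left mult.commute)
    also have "\<dots> \<le> F (avg_x n x) - \<alpha> / 2 * (norm (gF (avg_x n x)))\<^sup>2
            - \<alpha> / 4 * (norm ((1 / real n) *\<^sub>R (\<Sum>i<n. (1 / real m) *\<^sub>R (\<Sum>j<m. gf i j (x i)))))\<^sup>2
            + \<alpha> * L\<^sup>2 / real n * (\<Sum>i<n. (norm (x i - avg_x n x))\<^sup>2)
            + \<alpha>\<^sup>2 * L ^ 3 / real n * ((1 / real n) * (\<Sum>i<n. (1 / real m) * (\<Sum>j<m. (norm (avg_x n x - z i j))\<^sup>2)))"
      unfolding Qd_pure by (rule pure_bound[OF n m L smooth gF_def alpha])
    also have "\<dots> = RHS \<omega>" unfolding RHS_def s by (simp add: Let_def)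
    finally show ?thesis .
  qed
  have "AE \<omega> in ?M. real_cond_exp ?M ?Fk \<Phi> \<omega> \<le> RHS \<omega>"
    using c1 c2 c3
  proof eventually_elim
    case (elim \<omega>)
    have "real_cond_exp ?M ?Fk \<Phi> \<omega> \<le> (\<Sum>\<tau>\<in>?T. real_cond_exp ?M ?Fk (f\<tau> \<tau>) \<omega>)" using elim by simp
    also have "\<dots> = (\<Sum>\<tau>\<in>?T. Qt \<tau> \<omega> * (1 / real m ^ n))" using elim by (intro sum.cong refl) auto
    also have "\<dots> \<le> RHS \<omega>" by (rule pw)
    finally show ?case .
  qed
  then show ?thesis unfolding RHS_def St_def \<Phi>_def .
qed

end
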